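(* Let $H_n$ be the pyrene system with $n$ pyrene fragments. Then $$\lim_{n\to\infty}\frac{IDF(H_n)}{n\,\Phi(H_n)}=1+\frac{\sqrt{2}}{2}.$$
   Context: Pyrene system: draw the hexagonal lattice so that every hexagon has two vertical sides; horizontally adjacent hexagons then share a vertical edge. For $n\ge1$, $H_n$ is the hexagonal system (the plane graph formed by the vertices and edges of the following $4n$ hexagons) consisting of a horizontal linear row of $2n$ hexagons $h_{1,1},h_{1,2},\dots,h_{n,1},h_{n,2}$, consecutive ones sharing a vertical edge, together with, for each $i$, a hexagon $s_{i,1}$ directly above and a hexagon $s_{i,2}$ directly below the common edge of $h_{i,1}$ and $h_{i,2}$ (each sharing an edge with both $h_{i,1}$ and $h_{i,2}$). $\Phi(G)$ is the number of perfect matchings of $G$. For a perfect matching $M$ of $G$, a forcing set is a subset $S\subseteq M$ contained in no other perfect matching of $G$, and the forcing number $f(G,M)$ is the minimum size of a forcing set. The degree of freedom $IDF(G)$ is $\sum_{M}f(G,M)$, summed over all perfect matchings $M$ of $G$. *)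

theory Defs
  imports Complex_Main
begin

text \<open>Coordinates are scaled:
 a hexagon with centre (a,b) (x scaled by 2/sqrt 3, y by 2) has the six vertices
 (a-1,b-1),(a-1,b+1),(a,b+2),(a+1,b+1),(a+1,b-1),(a,b-2) in cyclic order.
 Horizontally adjacent hexagons have centres differing by (2,0) and share a vertical edge.\<close>

type_synonym vert = "int \<times> int"

definition hex_cycle :: "int \<times> int \<Rightarrow> vert list" where
  "hex_cycle c = (case c of (a,b) \<Rightarrow>
     [(a-1,b-1),(a-1,b+1),(a,b+2),(a+1,b+1),(a+1,b-1),(a,b-2)])"

definition hex_vertices :: "int \<times> int \<Rightarrow> vert set" where
  "hex_vertices c = set (hex_cycle c)"

definition hex_edges :: "int \<times> int \<Rightarrow> vert set set" where
  "hex_edges c = (let vs = hex_cycle c in {{vs ! i, vs ! ((i+1) mod 6)} | i. i < 6})"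

text \<open>Hexagon centres of the pyrene system H_n:
 h_{i,1} = (4i-4,0), h_{i,2} = (4i-2,0) (common vertical edge on x = 4i-3),
 s_{i,1} = (4i-3,3) directly above, s_{i,2} = (4i-3,-3) directly below that edge.\<close>

definition pyrene_hexagons :: "nat \<Rightarrow> (int \<times> int) set" where
  "pyrene_hexagons n = (\<Union>i\<in>{1..n}.
     {(4*int i-4, 0), (4*int i-2, 0), (4*int i-3, 3), (4*int i-3, -3)})"

definition pyrene_V :: "nat \<Rightarrow> vert set" where
  "pyrene_V n = (\<Union>c\<in>pyrene_hexagons n. hex_vertices c)"

definition pyrene_E :: "nat \<Rightarrow> vert set set" where
  "pyrene_E n = (\<Union>c\<in>pyrene_hexagons n. hex_edges c)"

definition perfect_matchings :: "'a set \<Rightarrow> 'a set set \<Rightarrow> 'a set set set" where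
  "perfect_matchings V E = {M. M \<subseteq> E \<and> (\<forall>v\<in>V. \<exists>!e. e \<in> M \<and> v \<in> e)}"

definition forcing_set :: "'a set \<Rightarrow> 'a set set \<Rightarrow> 'a set set \<Rightarrow> 'a set set \<Rightarrow> bool" where
  "forcing_set V E M S \<longleftrightarrow> S \<subseteq> M \<and>
     (\<forall>M'\<in>perfect_matchings V E. S \<subseteq> M' \<longrightarrow> M' = M)"

definition forcing_number :: "'a set \<Rightarrow> 'a set set \<Rightarrow> 'a set set \<Rightarrow> nat" where
  "forcing_number V E M = Min {card S | S. forcing_set V E M S}"

definition Phi :: "'a set \<Rightarrow> 'a set set \<Rightarrow> nat" where
  "Phi V E = card (perfect_matchings V E)"

definition IDF :: "'a set \<Rightarrow> 'a set set \<Rightarrow> nat" where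
  "IDF V E = (\<Sum>M\<in>perfect_matchings V E. forcing_number V E M)"

end

theory Submission
  imports Defs
begin

definition K :: "nat \<Rightarrow> vert" where "K k = (4*int k - 1, 1)"
definition Km :: "nat \<Rightarrow> vert" where "Km k = (4*int k - 1, -1)"
definition A :: "nat \<Rightarrow> vert" where "A i = (4*int i - 4, 2)"
definition Am :: "nat \<Rightarrow> vert" where "Am i = (4*int i - 4, -2)"
definition T1 :: "nat \<Rightarrow> vert" where "T1 i = (4*int i - 4, 4)"
definition T1m :: "nat \<Rightarrow> vert" where "T1m i = (4*int i - 4, -4)"
definition T2 :: "nat \<Rightarrow> vert" where "T2 i = (4*int i - 3, 5)"
definition T2m :: "nat \<Rightarrow> vert" where "T2m i = (4*int i - 3, -5)"
definition T3 :: "nat \<Rightarrow> vert" where "T3 i = (4*int i - 2, 4)"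
definition T3m :: "nat \<Rightarrow> vert" where "T3m i = (4*int i - 2, -4)"
definition B :: "nat \<Rightarrow> vert" where "B i = (4*int i - 3, 1)"
definition Bm :: "nat \<Rightarrow> vert" where "Bm i = (4*int i - 3, -1)"
definition C :: "nat \<Rightarrow> vert" where "C i = (4*int i - 2, 2)"
definition Cm :: "nat \<Rightarrow> vert" where "Cm i = (4*int i - 2, -2)"

lemmas vdefs = K_def Km_def A_def Am_def T1_def T1m_def T2_def T2m_def T3_def T3m_def
  B_def Bm_def C_def Cm_def

datatype et = eKA | eAT | eT12 | eT23 | eT3C | eAB | eBC | eCK
  | eKAm | eATm | eT12m | eT23m | eT3Cm | eABm | eBCm | eCKm | eBB

fun ed :: "et \<Rightarrow> nat \<Rightarrow> vert set" where
  "ed eKA i = {K (i-1), A i}"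
| "ed eAT i = {A i, T1 i}"
| "ed eT12 i = {T1 i, T2 i}"
| "ed eT23 i = {T2 i, T3 i}"
| "ed eT3C i = {T3 i, C i}"
| "ed eAB i = {A i, B i}"
| "ed eBC i = {B i, C i}"
| "ed eCK i = {C i, K i}"
| "ed eKAm i = {Km (i-1), Am i}"
| "ed eATm i = {Am i, T1m i}"
| "ed eT12m i = {T1m i, T2m i}"
| "ed eT23m i = {T2m i, T3m i}"
| "ed eT3Cm i = {T3m i, Cm i}"
| "ed eABm i = {Am i, Bm i}"
| "ed eBCm i = {Bm i, Cm i}"
| "ed eCKm i = {Cm i, Km i}"
| "ed eBB i = {B i, Bm i}"

definition vt :: "nat \<Rightarrow> vert set" where "vt k = {K k, Km k}"

lemma ed_inj: "1 \<le> i \<Longrightarrow> 1 \<le> j \<Longrightarrow> ed t i = ed u j \<longleftrightarrow> t = u \<and> i = j"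
  apply (cases t; cases u)
  apply (auto simp: doubleton_eq_iff vdefs)
  apply presburger+
  done


lemma ed_ne_vt: "ed t i \<noteq> vt k"
  apply (cases t)
  apply (auto simp: doubleton_eq_iff vdefs vt_def)
  apply presburger
  done

lemma ed_inj': "ed t i = ed u j \<longleftrightarrow> t = u \<and> i = j"
  apply (cases t; cases u)
  apply (auto simp: doubleton_eq_iff vdefs)
  apply presburger+
  done


lemma vt_inj: "vt k = vt l \<longleftrightarrow> k = l"
  by (auto simp: doubleton_eq_iff vdefs vt_def)

lemma hex_edges_eq: "hex_edges (a,b) = {{(a-1,b-1),(a-1,b+1)}, {(a-1,b+1),(a,b+2)}, {(a,b+2),(a+1,b+1)},
   {(a+1,b+1),(a+1,b-1)}, {(a+1,b-1),(a,b-2)}, {(a,b-2),(a-1,b-1)}}"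
proof -
  have e: "{f i | i::nat. i < 6} = f ` {0,1,2,3,4,5}" for f :: "nat \<Rightarrow> vert set"
  proof -
    have "{0,1,2,3,4,5} = {..<6::nat}" by auto
    then show ?thesis by auto
  qed
  show ?thesis unfolding hex_edges_def hex_cycle_def Let_def e by simp
qed

lemma hex_vertices_eq: "hex_vertices (a,b) = {(a-1,b-1),(a-1,b+1),(a,b+2),(a+1,b+1),(a+1,b-1),(a,b-2)}"
  by (simp add: hex_vertices_def hex_cycle_def)

lemma hexE1: "1 \<le> i \<Longrightarrow> e \<in> hex_edges (4*int i - 4, 0) \<Longrightarrow>
  e = vt (i-1) \<or> e = ed eKA i \<or> e = ed eAB i \<or> e = ed eBB i \<or> e = ed eABm i \<or> e = ed eKAm i"
  by (auto simp: hex_edges_eq vdefs vt_def doubleton_eq_iff of_nat_diff)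

lemma hexE2: "1 \<le> i \<Longrightarrow> e \<in> hex_edges (4*int i - 2, 0) \<Longrightarrow>
  e = vt i \<or> e = ed eBB i \<or> e = ed eBC i \<or> e = ed eCK i \<or> e = ed eCKm i \<or> e = ed eBCm i"
  by (auto simp: hex_edges_eq vdefs vt_def doubleton_eq_iff of_nat_diff)

lemma hexE3: "1 \<le> i \<Longrightarrow> e \<in> hex_edges (4*int i - 3, 3) \<Longrightarrow>
  e = ed eAT i \<or> e = ed eT12 i \<or> e = ed eT23 i \<or> e = ed eT3C i \<or> e = ed eBC i \<or> e = ed eAB i"
  by (auto simp: hex_edges_eq vdefs vt_def doubleton_eq_iff of_nat_diff)

lemma hexE4: "1 \<le> i \<Longrightarrow> e \<in> hex_edges (4*int i - 3, -3) \<Longrightarrow>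
  e = ed eATm i \<or> e = ed eT12m i \<or> e = ed eT23m i \<or> e = ed eT3Cm i \<or> e = ed eBCm i \<or> e = ed eABm i"
  by (auto simp: hex_edges_eq vdefs vt_def doubleton_eq_iff of_nat_diff)

lemma hexE1': "1 \<le> i \<Longrightarrow> {vt (i-1), ed eKA i, ed eAB i, ed eBB i, ed eABm i, ed eKAm i} \<subseteq> hex_edges (4*int i - 4, 0)"
  by (auto simp: hex_edges_eq vdefs vt_def doubleton_eq_iff of_nat_diff)

lemma hexE2': "1 \<le> i \<Longrightarrow> {vt i, ed eBB i, ed eBC i, ed eCK i, ed eCKm i, ed eBCm i} \<subseteq> hex_edges (4*int i - 2, 0)"
  by (auto simp: hex_edges_eq vdefs vt_def doubleton_eq_iff of_nat_diff)

lemma hexE3': "1 \<le> i \<Longrightarrow> {ed eAT i, ed eT12 i, ed eT23 i, ed eT3C i, ed eBC i, ed eAB i} \<subseteq> hex_edges (4*int i - 3, 3)"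
  by (auto simp: hex_edges_eq vdefs vt_def doubleton_eq_iff of_nat_diff)

lemma hexE4': "1 \<le> i \<Longrightarrow> {ed eATm i, ed eT12m i, ed eT23m i, ed eT3Cm i, ed eBCm i, ed eABm i} \<subseteq> hex_edges (4*int i - 3, -3)"
  by (auto simp: hex_edges_eq vdefs vt_def doubleton_eq_iff of_nat_diff)

lemma hexV1: "1 \<le> i \<Longrightarrow> hex_vertices (4*int i - 4, 0) = {Km (i-1), K (i-1), A i, B i, Bm i, Am i}"
  by (simp add: hex_vertices_eq vdefs of_nat_diff)
lemma hexV2: "1 \<le> i \<Longrightarrow> hex_vertices (4*int i - 2, 0) = {Bm i, B i, C i, K i, Km i, Cm i}"
  by (simp add: hex_vertices_eq vdefs of_nat_diff)
lemma hexV3: "1 \<le> i \<Longrightarrow> hex_vertices (4*int i - 3, 3) = {A i, T1 i, T2 i, T3 i, C i, B i}"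
  by (simp add: hex_vertices_eq vdefs of_nat_diff)
lemma hexV4: "1 \<le> i \<Longrightarrow> hex_vertices (4*int i - 3, -3) = {T1m i, Am i, Bm i, Cm i, T3m i, T2m i}"
  by (simp add: hex_vertices_eq vdefs of_nat_diff)

lemma E_iff: "e \<in> pyrene_E n \<longleftrightarrow> (1 \<le> n \<and> (\<exists>k\<le>n. e = vt k)) \<or> (\<exists>t i. 1 \<le> i \<and> i \<le> n \<and> e = ed t i)"
proof
  assume "e \<in> pyrene_E n"
  then obtain i c where i: "i \<in> {1..n}" and c: "c \<in> {(4*int i-4, 0), (4*int i-2, 0), (4*int i-3, 3), (4*int i-3, -3)}"
    and e: "e \<in> hex_edges c"
    unfolding pyrene_E_def pyrene_hexagons_def by blast
  from i have i1: "1 \<le> i" "i \<le> n" by auto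
  from c show "(1 \<le> n \<and> (\<exists>k\<le>n. e = vt k)) \<or> (\<exists>t i. 1 \<le> i \<and> i \<le> n \<and> e = ed t i)"
  proof (elim insertE emptyE)
    assume "c = (4*int i-4, 0)"
    with hexE1[OF i1(1)] e i1 show ?thesis by (metis diff_le_self le_trans)
  next
    assume "c = (4*int i-2, 0)"
    with hexE2[OF i1(1)] e i1 show ?thesis by (metis le_trans)
  next
    assume "c = (4*int i-3, 3)"
    with hexE3[OF i1(1)] e i1 show ?thesis by metis
  next
    assume "c = (4*int i-3, -3)"
    with hexE4[OF i1(1)] e i1 show ?thesis by metis
  qed
next
  have mem: "e \<in> pyrene_E n" if "i \<in> {1..n}" "e \<in> hex_edges c"
     "c \<in> {(4*int i-4, 0), (4*int i-2, 0), (4*int i-3, 3), (4*int i-3, -3)}" for i c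
    using that unfolding pyrene_E_def pyrene_hexagons_def by blast
  assume "(1 \<le> n \<and> (\<exists>k\<le>n. e = vt k)) \<or> (\<exists>t i. 1 \<le> i \<and> i \<le> n \<and> e = ed t i)"
  then show "e \<in> pyrene_E n"
  proof (elim disjE exE conjE)
    fix k assume k: "1 \<le> n" "k \<le> n" "e = vt k"
    show ?thesis
    proof (cases "k = 0")
      case True
      then show ?thesis using hexE1'[of 1] k by (intro mem[where i=1 and c="(4*int 1-4, 0)"]) auto
    next
      case False
      then show ?thesis using hexE2'[of k] k by (intro mem[where i=k and c="(4*int k-2, 0)"]) auto
    qed
  next
    fix t i assume ti: "1 \<le> i" "i \<le> n" "e = ed t i"
    have u: "e \<in> hex_edges (4*int i-4, 0) \<union> hex_edges (4*int i-2, 0) \<union> hex_edges (4*int i-3, 3) \<union> hex_edges (4*int i-3, -3)"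
      using hexE1'[of i] hexE2'[of i] hexE3'[of i] hexE4'[of i] ti
      by (cases t) auto
    have "i \<in> {1..n}" using ti by auto
    with u show ?thesis using mem by blast
  qed
qed

definition unitV :: "nat \<Rightarrow> vert set" where
  "unitV i = {K (i-1), Km (i-1), A i, Am i, T1 i, T1m i, T2 i, T2m i, T3 i, T3m i, B i, Bm i, C i, Cm i, K i, Km i}"

lemma V_iff: "v \<in> pyrene_V n \<longleftrightarrow> (\<exists>i. 1 \<le> i \<and> i \<le> n \<and> v \<in> unitV i)"
proof -
  have "pyrene_V n = (\<Union>i\<in>{1..n}. unitV i)"
    unfolding pyrene_V_def pyrene_hexagons_def
    by (auto simp: hexV1 hexV2 hexV3 hexV4 unitV_def)
  then show ?thesis by auto
qed

lemma four_neq[simp]: fixes a b :: int shows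
  "(4 * a = 1 + 4 * b) = False" "(4 * a = 2 + 4 * b) = False" "(4 * a = 3 + 4 * b) = False"
  "(1 + 4 * a = 4 * b) = False" "(2 + 4 * a = 4 * b) = False" "(3 + 4 * a = 4 * b) = False"
  by presburger+

lemma inc_K: assumes "e \<in> pyrene_E n" "K k \<in> e" shows "e \<in> {vt k, ed eCK k, ed eKA (Suc k)}"
  using assms unfolding E_iff
  apply (elim disjE exE conjE)
   apply (auto simp: vt_def vdefs)[1]
  subgoal for t j by (cases t) (auto simp: vdefs vt_def of_nat_diff doubleton_eq_iff)
  done

lemma inc_Km: assumes "e \<in> pyrene_E n" "Km k \<in> e" shows "e \<in> {vt k, ed eCKm k, ed eKAm (Suc k)}"
  using assms unfolding E_iff
  apply (elim disjE exE conjE)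
   apply (auto simp: vt_def vdefs)[1]
  subgoal for t j by (cases t) (auto simp: vdefs vt_def of_nat_diff doubleton_eq_iff)
  done

lemma inc_A: assumes "e \<in> pyrene_E n" "A i \<in> e" shows "e \<in> {ed eKA i, ed eAB i, ed eAT i}"
  using assms unfolding E_iff
  apply (elim disjE exE conjE)
   apply (auto simp: vt_def vdefs)[1]
  subgoal for t j by (cases t) (auto simp: vdefs vt_def of_nat_diff doubleton_eq_iff)
  done

lemma inc_Am: assumes "e \<in> pyrene_E n" "Am i \<in> e" shows "e \<in> {ed eKAm i, ed eABm i, ed eATm i}"
  using assms unfolding E_iff
  apply (elim disjE exE conjE)
   apply (auto simp: vt_def vdefs)[1]
  subgoal for t j by (cases t) (auto simp: vdefs vt_def of_nat_diff doubleton_eq_iff)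
  done

lemma inc_T1: assumes "e \<in> pyrene_E n" "T1 i \<in> e" shows "e \<in> {ed eAT i, ed eT12 i}"
  using assms unfolding E_iff
  apply (elim disjE exE conjE)
   apply (auto simp: vt_def vdefs)[1]
  subgoal for t j by (cases t) (auto simp: vdefs vt_def of_nat_diff doubleton_eq_iff)
  done

lemma inc_T1m: assumes "e \<in> pyrene_E n" "T1m i \<in> e" shows "e \<in> {ed eATm i, ed eT12m i}"
  using assms unfolding E_iff
  apply (elim disjE exE conjE)
   apply (auto simp: vt_def vdefs)[1]
  subgoal for t j by (cases t) (auto simp: vdefs vt_def of_nat_diff doubleton_eq_iff)
  done

lemma inc_T2: assumes "e \<in> pyrene_E n" "T2 i \<in> e" shows "e \<in> {ed eT12 i, ed eT23 i}"
  using assms unfolding E_iff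
  apply (elim disjE exE conjE)
   apply (auto simp: vt_def vdefs)[1]
  subgoal for t j by (cases t) (auto simp: vdefs vt_def of_nat_diff doubleton_eq_iff)
  done

lemma inc_T2m: assumes "e \<in> pyrene_E n" "T2m i \<in> e" shows "e \<in> {ed eT12m i, ed eT23m i}"
  using assms unfolding E_iff
  apply (elim disjE exE conjE)
   apply (auto simp: vt_def vdefs)[1]
  subgoal for t j by (cases t) (auto simp: vdefs vt_def of_nat_diff doubleton_eq_iff)
  done

lemma inc_T3: assumes "e \<in> pyrene_E n" "T3 i \<in> e" shows "e \<in> {ed eT23 i, ed eT3C i}"
  using assms unfolding E_iff
  apply (elim disjE exE conjE)
   apply (auto simp: vt_def vdefs)[1]
  subgoal for t j by (cases t) (auto simp: vdefs vt_def of_nat_diff doubleton_eq_iff)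
  done

lemma inc_T3m: assumes "e \<in> pyrene_E n" "T3m i \<in> e" shows "e \<in> {ed eT23m i, ed eT3Cm i}"
  using assms unfolding E_iff
  apply (elim disjE exE conjE)
   apply (auto simp: vt_def vdefs)[1]
  subgoal for t j by (cases t) (auto simp: vdefs vt_def of_nat_diff doubleton_eq_iff)
  done

lemma inc_C: assumes "e \<in> pyrene_E n" "C i \<in> e" shows "e \<in> {ed eT3C i, ed eBC i, ed eCK i}"
  using assms unfolding E_iff
  apply (elim disjE exE conjE)
   apply (auto simp: vt_def vdefs)[1]
  subgoal for t j by (cases t) (auto simp: vdefs vt_def of_nat_diff doubleton_eq_iff)
  done

lemma inc_Cm: assumes "e \<in> pyrene_E n" "Cm i \<in> e" shows "e \<in> {ed eT3Cm i, ed eBCm i, ed eCKm i}"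
  using assms unfolding E_iff
  apply (elim disjE exE conjE)
   apply (auto simp: vt_def vdefs)[1]
  subgoal for t j by (cases t) (auto simp: vdefs vt_def of_nat_diff doubleton_eq_iff)
  done

lemma inc_B: assumes "e \<in> pyrene_E n" "B i \<in> e" shows "e \<in> {ed eAB i, ed eBC i, ed eBB i}"
  using assms unfolding E_iff
  apply (elim disjE exE conjE)
   apply (auto simp: vt_def vdefs)[1]
  subgoal for t j by (cases t) (auto simp: vdefs vt_def of_nat_diff doubleton_eq_iff)
  done

lemma inc_Bm: assumes "e \<in> pyrene_E n" "Bm i \<in> e" shows "e \<in> {ed eABm i, ed eBCm i, ed eBB i}"
  using assms unfolding E_iff
  apply (elim disjE exE conjE)
   apply (auto simp: vt_def vdefs)[1]
  subgoal for t j by (cases t) (auto simp: vdefs vt_def of_nat_diff doubleton_eq_iff)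
  done


definition one3 :: "bool \<Rightarrow> bool \<Rightarrow> bool \<Rightarrow> bool" where
  "one3 a b c \<longleftrightarrow> (a \<or> b \<or> c) \<and> \<not>(a\<and>b) \<and> \<not>(a\<and>c) \<and> \<not>(b\<and>c)"

lemma pm_one3:
  assumes M: "M \<in> perfect_matchings V E" and v: "v \<in> V"
    and inc: "\<And>e. e \<in> E \<Longrightarrow> v \<in> e \<Longrightarrow> e \<in> {a,b,c}"
    and va: "v \<in> a" "v \<in> b" "v \<in> c" and d: "a \<noteq> b" "a \<noteq> c" "b \<noteq> c"
  shows "one3 (a \<in> M) (b \<in> M) (c \<in> M)"
proof -
  from M have ME: "M \<subseteq> E" and u: "\<exists>!e. e \<in> M \<and> v \<in> e" using v unfolding perfect_matchings_def by auto
  from u obtain e where e: "e \<in> M" "v \<in> e" and uu: "\<And>e'. e' \<in> M \<Longrightarrow> v \<in> e' \<Longrightarrow> e' = e" by blast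
  have "e \<in> {a,b,c}" using inc ME e by blast
  then show ?thesis unfolding one3_def using uu va d e by blast
qed

lemma pm_xor2:
  assumes M: "M \<in> perfect_matchings V E" and v: "v \<in> V"
    and inc: "\<And>e. e \<in> E \<Longrightarrow> v \<in> e \<Longrightarrow> e \<in> {a,b}"
    and va: "v \<in> a" "v \<in> b" and d: "a \<noteq> b"
  shows "(a \<in> M) \<noteq> (b \<in> M)"
proof -
  from M have ME: "M \<subseteq> E" and u: "\<exists>!e. e \<in> M \<and> v \<in> e" using v unfolding perfect_matchings_def by auto
  from u obtain e where e: "e \<in> M" "v \<in> e" and uu: "\<And>e'. e' \<in> M \<Longrightarrow> v \<in> e' \<Longrightarrow> e' = e" by blast
  have "e \<in> {a,b}" using inc ME e by blast
  then show ?thesis using uu va d e by blast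
qed

lemma one3_unique:
  assumes "one3 (a \<in> M) (b \<in> M) (c \<in> M)" "v \<in> a" "v \<in> b" "v \<in> c"
    "\<And>e. e \<in> M \<Longrightarrow> v \<in> e \<Longrightarrow> e \<in> {a,b,c}"
  shows "\<exists>!e. e \<in> M \<and> v \<in> e"
  using assms unfolding one3_def by blast

lemma xor2_unique:
  assumes "(a \<in> M) \<noteq> (b \<in> M)" "v \<in> a" "v \<in> b"
    "\<And>e. e \<in> M \<Longrightarrow> v \<in> e \<Longrightarrow> e \<in> {a,b}"
  shows "\<exists>!e. e \<in> M \<and> v \<in> e"
  using assms by blast

lemma vt_ne_ed: "vt k \<noteq> ed t i"
  using ed_ne_vt by metis

lemmas ed_simps = ed_inj' ed_ne_vt vt_ne_ed vt_inj

lemma inV_unit: "1 \<le> i \<Longrightarrow> i \<le> n \<Longrightarrow> v \<in> unitV i \<Longrightarrow> v \<in> pyrene_V n"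
  using V_iff by blast

lemma inV_K: "1 \<le> n \<Longrightarrow> k \<le> n \<Longrightarrow> K k \<in> pyrene_V n \<and> Km k \<in> pyrene_V n"
proof (cases "k = 0")
  case True
  assume "1 \<le> n"
  then show ?thesis using inV_unit[of 1 n] True by (auto simp: unitV_def)
next
  case False
  assume "k \<le> n"
  then show ?thesis using inV_unit[of k n] False by (auto simp: unitV_def)
qed

lemma inE_ed: "1 \<le> i \<Longrightarrow> i \<le> n \<Longrightarrow> ed t i \<in> pyrene_E n"
  unfolding E_iff by blast

lemma inE_vt: "1 \<le> n \<Longrightarrow> k \<le> n \<Longrightarrow> vt k \<in> pyrene_E n"
  unfolding E_iff by blast

lemma notE_ed0: "ed t 0 \<notin> pyrene_E n"
  unfolding E_iff by (auto simp: ed_simps)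

lemma notE_edSuc: "ed t (Suc n) \<notin> pyrene_E n"
  unfolding E_iff by (auto simp: ed_simps)

definition PMn :: "nat \<Rightarrow> vert set set set" where
  "PMn n = perfect_matchings (pyrene_V n) (pyrene_E n)"

lemma PMn_sub: "M \<in> PMn n \<Longrightarrow> M \<subseteq> pyrene_E n"
  unfolding PMn_def perfect_matchings_def by auto

lemma pmK: assumes "M \<in> PMn n" "1 \<le> n" "k \<le> n"
  shows "one3 (vt k \<in> M) (ed eCK k \<in> M) (ed eKA (Suc k) \<in> M)"
  apply (rule pm_one3[OF assms(1)[unfolded PMn_def], where v="K k"])
  subgoal using inV_K[OF assms(2,3)] by blast
  subgoal using inc_K by blast
  subgoal by (simp add: vt_def)
  subgoal by simp
  subgoal by simp
  by (simp_all del: ed.simps add: ed_simps)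

lemma pmKm: assumes "M \<in> PMn n" "1 \<le> n" "k \<le> n"
  shows "one3 (vt k \<in> M) (ed eCKm k \<in> M) (ed eKAm (Suc k) \<in> M)"
  apply (rule pm_one3[OF assms(1)[unfolded PMn_def], where v="Km k"])
  subgoal using inV_K[OF assms(2,3)] by blast
  subgoal using inc_Km by blast
  subgoal by (simp add: vt_def)
  subgoal by simp
  subgoal by simp
  by (simp_all del: ed.simps add: ed_simps)

lemma pmA: assumes "M \<in> PMn n" "1 \<le> i" "i \<le> n"
  shows "one3 (ed eKA i \<in> M) (ed eAB i \<in> M) (ed eAT i \<in> M)"
  apply (rule pm_one3[OF assms(1)[unfolded PMn_def], where v="A i"])
  subgoal using inV_unit[OF assms(2,3)] by (simp add: unitV_def)
  subgoal using inc_A by blast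
  subgoal by simp
  subgoal by simp
  subgoal by simp
  by (simp_all del: ed.simps add: ed_simps)

lemma pmAm: assumes "M \<in> PMn n" "1 \<le> i" "i \<le> n"
  shows "one3 (ed eKAm i \<in> M) (ed eABm i \<in> M) (ed eATm i \<in> M)"
  apply (rule pm_one3[OF assms(1)[unfolded PMn_def], where v="Am i"])
  subgoal using inV_unit[OF assms(2,3)] by (simp add: unitV_def)
  subgoal using inc_Am by blast
  subgoal by simp
  subgoal by simp
  subgoal by simp
  by (simp_all del: ed.simps add: ed_simps)

lemma pmC: assumes "M \<in> PMn n" "1 \<le> i" "i \<le> n"
  shows "one3 (ed eT3C i \<in> M) (ed eBC i \<in> M) (ed eCK i \<in> M)"
  apply (rule pm_one3[OF assms(1)[unfolded PMn_def], where v="C i"])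
  subgoal using inV_unit[OF assms(2,3)] by (simp add: unitV_def)
  subgoal using inc_C by blast
  subgoal by simp
  subgoal by simp
  subgoal by simp
  by (simp_all del: ed.simps add: ed_simps)

lemma pmCm: assumes "M \<in> PMn n" "1 \<le> i" "i \<le> n"
  shows "one3 (ed eT3Cm i \<in> M) (ed eBCm i \<in> M) (ed eCKm i \<in> M)"
  apply (rule pm_one3[OF assms(1)[unfolded PMn_def], where v="Cm i"])
  subgoal using inV_unit[OF assms(2,3)] by (simp add: unitV_def)
  subgoal using inc_Cm by blast
  subgoal by simp
  subgoal by simp
  subgoal by simp
  by (simp_all del: ed.simps add: ed_simps)

lemma pmB: assumes "M \<in> PMn n" "1 \<le> i" "i \<le> n"
  shows "one3 (ed eAB i \<in> M) (ed eBC i \<in> M) (ed eBB i \<in> M)"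
  apply (rule pm_one3[OF assms(1)[unfolded PMn_def], where v="B i"])
  subgoal using inV_unit[OF assms(2,3)] by (simp add: unitV_def)
  subgoal using inc_B by blast
  subgoal by simp
  subgoal by simp
  subgoal by simp
  by (simp_all del: ed.simps add: ed_simps)

lemma pmBm: assumes "M \<in> PMn n" "1 \<le> i" "i \<le> n"
  shows "one3 (ed eABm i \<in> M) (ed eBCm i \<in> M) (ed eBB i \<in> M)"
  apply (rule pm_one3[OF assms(1)[unfolded PMn_def], where v="Bm i"])
  subgoal using inV_unit[OF assms(2,3)] by (simp add: unitV_def)
  subgoal using inc_Bm by blast
  subgoal by simp
  subgoal by simp
  subgoal by simp
  by (simp_all del: ed.simps add: ed_simps)

lemma pmT1: assumes "M \<in> PMn n" "1 \<le> i" "i \<le> n"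
  shows "(ed eAT i \<in> M) \<noteq> (ed eT12 i \<in> M)"
  apply (rule pm_xor2[OF assms(1)[unfolded PMn_def], where v="T1 i"])
  subgoal using inV_unit[OF assms(2,3)] by (simp add: unitV_def)
  subgoal using inc_T1 by blast
  subgoal by simp
  subgoal by simp
  by (simp_all del: ed.simps add: ed_simps)

lemma pmT1m: assumes "M \<in> PMn n" "1 \<le> i" "i \<le> n"
  shows "(ed eATm i \<in> M) \<noteq> (ed eT12m i \<in> M)"
  apply (rule pm_xor2[OF assms(1)[unfolded PMn_def], where v="T1m i"])
  subgoal using inV_unit[OF assms(2,3)] by (simp add: unitV_def)
  subgoal using inc_T1m by blast
  subgoal by simp
  subgoal by simp
  by (simp_all del: ed.simps add: ed_simps)

lemma pmT2: assumes "M \<in> PMn n" "1 \<le> i" "i \<le> n"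
  shows "(ed eT12 i \<in> M) \<noteq> (ed eT23 i \<in> M)"
  apply (rule pm_xor2[OF assms(1)[unfolded PMn_def], where v="T2 i"])
  subgoal using inV_unit[OF assms(2,3)] by (simp add: unitV_def)
  subgoal using inc_T2 by blast
  subgoal by simp
  subgoal by simp
  by (simp_all del: ed.simps add: ed_simps)

lemma pmT2m: assumes "M \<in> PMn n" "1 \<le> i" "i \<le> n"
  shows "(ed eT12m i \<in> M) \<noteq> (ed eT23m i \<in> M)"
  apply (rule pm_xor2[OF assms(1)[unfolded PMn_def], where v="T2m i"])
  subgoal using inV_unit[OF assms(2,3)] by (simp add: unitV_def)
  subgoal using inc_T2m by blast
  subgoal by simp
  subgoal by simp
  by (simp_all del: ed.simps add: ed_simps)

lemma pmT3: assumes "M \<in> PMn n" "1 \<le> i" "i \<le> n"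
  shows "(ed eT23 i \<in> M) \<noteq> (ed eT3C i \<in> M)"
  apply (rule pm_xor2[OF assms(1)[unfolded PMn_def], where v="T3 i"])
  subgoal using inV_unit[OF assms(2,3)] by (simp add: unitV_def)
  subgoal using inc_T3 by blast
  subgoal by simp
  subgoal by simp
  by (simp_all del: ed.simps add: ed_simps)

lemma pmT3m: assumes "M \<in> PMn n" "1 \<le> i" "i \<le> n"
  shows "(ed eT23m i \<in> M) \<noteq> (ed eT3Cm i \<in> M)"
  apply (rule pm_xor2[OF assms(1)[unfolded PMn_def], where v="T3m i"])
  subgoal using inV_unit[OF assms(2,3)] by (simp add: unitV_def)
  subgoal using inc_T3m by blast
  subgoal by simp
  subgoal by simp
  by (simp_all del: ed.simps add: ed_simps)

declare ed.simps[simp del]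

datatype letter = D bool bool | BL | BR

fun inM :: "et \<Rightarrow> letter \<Rightarrow> bool" where
  "inM t (D p q) = (case t of eAB \<Rightarrow> p | eT3C \<Rightarrow> p | eT12 \<Rightarrow> p | eBC \<Rightarrow> \<not>p | eAT \<Rightarrow> \<not>p | eT23 \<Rightarrow> \<not>p
     | eABm \<Rightarrow> q | eT3Cm \<Rightarrow> q | eT12m \<Rightarrow> q | eBCm \<Rightarrow> \<not>q | eATm \<Rightarrow> \<not>q | eT23m \<Rightarrow> \<not>q | _ \<Rightarrow> False)"
| "inM t BL = (t \<in> {eBB, eKA, eKAm, eT3C, eT12, eT3Cm, eT12m})"
| "inM t BR = (t \<in> {eBB, eCK, eCKm, eAT, eT23, eATm, eT23m})"

lemma inM_CK: "inM eCK l \<longleftrightarrow> l = BR" by (cases l) auto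
lemma inM_CKm: "inM eCKm l \<longleftrightarrow> l = BR" by (cases l) auto
lemma inM_KA: "inM eKA l \<longleftrightarrow> l = BL" by (cases l) auto
lemma inM_KAm: "inM eKAm l \<longleftrightarrow> l = BL" by (cases l) auto

lemma inM_inj: assumes "\<And>t. inM t l = inM t l'" shows "l = l'"
proof -
  have "inM eAB l = inM eAB l'" "inM eABm l = inM eABm l'" "inM eKA l = inM eKA l'" "inM eCK l = inM eCK l'"
    using assms by blast+
  then show ?thesis by (cases l; cases l') auto
qed

definition lt :: "letter list \<Rightarrow> nat \<Rightarrow> letter" where "lt xs i = xs ! (i - 1)"

definition vin :: "letter list \<Rightarrow> nat \<Rightarrow> bool" where
  "vin xs k \<longleftrightarrow> \<not>(1 \<le> k \<and> k \<le> length xs \<and> lt xs k = BR) \<and> \<not>(k < length xs \<and> lt xs (Suc k) = BL)"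

definition mat :: "letter list \<Rightarrow> vert set set" where
  "mat xs = {vt k | k. k \<le> length xs \<and> vin xs k} \<union> {ed t i | t i. 1 \<le> i \<and> i \<le> length xs \<and> inM t (lt xs i)}"

definition valid :: "letter list \<Rightarrow> bool" where
  "valid xs \<longleftrightarrow> (\<forall>i. 1 \<le> i \<and> i < length xs \<longrightarrow> \<not>(lt xs i = BR \<and> lt xs (Suc i) = BL))"

lemma mat_vt: "vt k \<in> mat xs \<longleftrightarrow> k \<le> length xs \<and> vin xs k"
  unfolding mat_def by (auto simp: ed_simps)

lemma mat_ed: "ed t i \<in> mat xs \<longleftrightarrow> 1 \<le> i \<and> i \<le> length xs \<and> inM t (lt xs i)"
  unfolding mat_def by (auto simp: ed_simps)

lemma unit_prop:
  assumes "one3 vl cl ka" "one3 vl clm kam"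
   "one3 ka ab at0" "at0 \<noteq> t12" "t12 \<noteq> t23" "t23 \<noteq> t3c" "one3 t3c bc ck" "one3 ab bc bb"
   "one3 kam abm atm0" "atm0 \<noteq> t12m" "t12m \<noteq> t23m" "t23m \<noteq> t3cm" "one3 t3cm bcm ckm" "one3 abm bcm bb"
   "one3 vr ck ar" "one3 vr ckm arm"
   "vl \<or> (cl \<and> clm) \<or> (ka \<and> kam)"
  shows "vr \<or> (ck \<and> ckm) \<or> (ar \<and> arm)"
   and "ka \<longrightarrow> kam \<and> bb \<and> t3c \<and> t12 \<and> t3cm \<and> t12m \<and> \<not>ck \<and> \<not> ckm \<and> \<not>ab \<and> \<not>abm \<and> \<not>bc \<and> \<not>bcm \<and> \<not>at0 \<and> \<not>atm0 \<and> \<not>t23 \<and> \<not>t23m"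
   and "ck \<longrightarrow> ckm \<and> bb \<and> at0 \<and> t23 \<and> atm0 \<and> t23m \<and> \<not>ka \<and> \<not> kam \<and> \<not>ab \<and> \<not>abm \<and> \<not>bc \<and> \<not>bcm \<and> \<not>t3c \<and> \<not>t3cm \<and> \<not>t12 \<and> \<not>t12m"
   and "\<not>ka \<longrightarrow> \<not>ck \<longrightarrow> \<not>kam \<and> \<not>ckm \<and> \<not>bb \<and> (ab = t3c) \<and> (ab = t12) \<and> (bc = (\<not>ab)) \<and> (at0 = (\<not>ab)) \<and> (t23 = (\<not>ab))
      \<and> (abm = t3cm) \<and> (abm = t12m) \<and> (bcm = (\<not>abm)) \<and> (atm0 = (\<not>abm)) \<and> (t23m = (\<not>abm))"
  using assms unfolding one3_def by argo+

lemma unit_facts: assumes "M \<in> PMn n" "1 \<le> i" "i \<le> n"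
  shows "one3 (vt (i-1) \<in> M) (ed eCK (i-1) \<in> M) (ed eKA i \<in> M)"
    "one3 (vt (i-1) \<in> M) (ed eCKm (i-1) \<in> M) (ed eKAm i \<in> M)"
    "one3 (ed eKA i \<in> M) (ed eAB i \<in> M) (ed eAT i \<in> M)"
    "(ed eAT i \<in> M) \<noteq> (ed eT12 i \<in> M)"
    "(ed eT12 i \<in> M) \<noteq> (ed eT23 i \<in> M)"
    "(ed eT23 i \<in> M) \<noteq> (ed eT3C i \<in> M)"
    "one3 (ed eT3C i \<in> M) (ed eBC i \<in> M) (ed eCK i \<in> M)"
    "one3 (ed eAB i \<in> M) (ed eBC i \<in> M) (ed eBB i \<in> M)"
    "one3 (ed eKAm i \<in> M) (ed eABm i \<in> M) (ed eATm i \<in> M)"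
    "(ed eATm i \<in> M) \<noteq> (ed eT12m i \<in> M)"
    "(ed eT12m i \<in> M) \<noteq> (ed eT23m i \<in> M)"
    "(ed eT23m i \<in> M) \<noteq> (ed eT3Cm i \<in> M)"
    "one3 (ed eT3Cm i \<in> M) (ed eBCm i \<in> M) (ed eCKm i \<in> M)"
    "one3 (ed eABm i \<in> M) (ed eBCm i \<in> M) (ed eBB i \<in> M)"
    "one3 (vt i \<in> M) (ed eCK i \<in> M) (ed eKA (Suc i) \<in> M)"
    "one3 (vt i \<in> M) (ed eCKm i \<in> M) (ed eKAm (Suc i) \<in> M)"
proof -
  have n: "1 \<le> n" using assms by auto
  have s: "Suc (i-1) = i" using assms by auto
  show "one3 (vt (i-1) \<in> M) (ed eCK (i-1) \<in> M) (ed eKA i \<in> M)"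
    using pmK[OF assms(1) n, of "i-1"] assms s by simp
  show "one3 (vt (i-1) \<in> M) (ed eCKm (i-1) \<in> M) (ed eKAm i \<in> M)"
    using pmKm[OF assms(1) n, of "i-1"] assms s by simp
  show "one3 (vt i \<in> M) (ed eCK i \<in> M) (ed eKA (Suc i) \<in> M)"
    using pmK[OF assms(1) n, of i] assms by simp
  show "one3 (vt i \<in> M) (ed eCKm i \<in> M) (ed eKAm (Suc i) \<in> M)"
    using pmKm[OF assms(1) n, of i] assms by simp
qed (use pmA[OF assms] pmAm[OF assms] pmB[OF assms] pmBm[OF assms] pmC[OF assms] pmCm[OF assms]
  pmT1[OF assms] pmT1m[OF assms] pmT2[OF assms] pmT2m[OF assms] pmT3[OF assms] pmT3m[OF assms] in simp_all)

definition lof :: "vert set set \<Rightarrow> nat \<Rightarrow> letter" where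
  "lof M i = (if ed eKA i \<in> M then BL else if ed eCK i \<in> M then BR else D (ed eAB i \<in> M) (ed eABm i \<in> M))"

definition consM :: "vert set set \<Rightarrow> nat \<Rightarrow> bool" where
  "consM M k \<longleftrightarrow> vt k \<in> M \<or> (ed eCK k \<in> M \<and> ed eCKm k \<in> M) \<or> (ed eKA (Suc k) \<in> M \<and> ed eKAm (Suc k) \<in> M)"

lemma phantom0: "M \<in> PMn n \<Longrightarrow> ed t 0 \<notin> M"
  using PMn_sub notE_ed0 by blast

lemma phantomS: "M \<in> PMn n \<Longrightarrow> ed t (Suc n) \<notin> M"
  using PMn_sub notE_edSuc by blast

lemma cons_all: assumes "M \<in> PMn n" "1 \<le> n" shows "k \<le> n \<Longrightarrow> consM M k"
proof (induction k)
  case 0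
  then show ?case using pmK[OF assms, of 0] pmKm[OF assms, of 0] phantom0[OF assms(1)]
    unfolding consM_def one3_def by auto
next
  case (Suc k)
  then have c: "consM M k" by simp
  have i: "1 \<le> Suc k" "Suc k \<le> n" using Suc by auto
  show ?case
    using unit_prop(1)[OF unit_facts[OF assms(1) i, unfolded diff_Suc_1] c[unfolded consM_def, simplified]]
    unfolding consM_def by simp
qed

lemma unit_char: assumes "M \<in> PMn n" "1 \<le> i" "i \<le> n"
  shows "ed t i \<in> M \<longleftrightarrow> inM t (lof M i)"
proof -
  have c: "consM M (i-1)" using cons_all[OF assms(1), of "i-1"] assms by auto
  have s: "Suc (i-1) = i" using assms by auto
  note F = unit_facts[OF assms]
  note p2 = unit_prop(2)[OF F c[unfolded consM_def s]]
  note p3 = unit_prop(3)[OF F c[unfolded consM_def s]]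
  note p4 = unit_prop(4)[OF F c[unfolded consM_def s]]
  show ?thesis using p2 p3 p4 unfolding lof_def by (cases t) auto
qed


lemma lof_BR: "M \<in> PMn n \<Longrightarrow> 1 \<le> i \<Longrightarrow> i \<le> n \<Longrightarrow> lof M i = BR \<longleftrightarrow> ed eCK i \<in> M"
  using unit_char[of M n i eCK] by (simp add: inM_CK)

lemma lof_BL: "M \<in> PMn n \<Longrightarrow> 1 \<le> i \<Longrightarrow> i \<le> n \<Longrightarrow> lof M i = BL \<longleftrightarrow> ed eKA i \<in> M"
  using unit_char[of M n i eKA] by (simp add: inM_KA)

definition xs_of :: "vert set set \<Rightarrow> nat \<Rightarrow> letter list" where
  "xs_of M n = map (lof M) [1..<Suc n]"

lemma xs_of_len[simp]: "length (xs_of M n) = n"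
  by (simp add: xs_of_def)

lemma lt_xs_of: "1 \<le> i \<Longrightarrow> i \<le> n \<Longrightarrow> lt (xs_of M n) i = lof M i"
  by (simp add: xs_of_def lt_def del: upt_Suc)

lemma pm_is_mat: assumes M: "M \<in> PMn n" and n: "1 \<le> n"
  shows "valid (xs_of M n)" "M = mat (xs_of M n)"
proof -
  show "valid (xs_of M n)"
    unfolding valid_def
  proof (intro allI impI notI)
    fix i assume i: "1 \<le> i \<and> i < length (xs_of M n)" and b: "lt (xs_of M n) i = BR \<and> lt (xs_of M n) (Suc i) = BL"
    then have "ed eCK i \<in> M" "ed eKA (Suc i) \<in> M"
      using lt_xs_of[of i n M] lt_xs_of[of "Suc i" n M] lof_BR[OF M, of i] lof_BL[OF M, of "Suc i"] by auto
    then show False using pmK[OF M n, of i] i unfolding one3_def by auto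
  qed
  have vt_eq: "vt k \<in> M \<longleftrightarrow> vt k \<in> mat (xs_of M n)" if k: "k \<le> n" for k
  proof -
    have o: "one3 (vt k \<in> M) (ed eCK k \<in> M) (ed eKA (Suc k) \<in> M)" using pmK[OF M n k] .
    have a: "(1 \<le> k \<and> k \<le> n \<and> lt (xs_of M n) k = BR) \<longleftrightarrow> ed eCK k \<in> M"
    proof (cases "k = 0")
      case True then show ?thesis using phantom0[OF M] by auto
    next
      case False then show ?thesis using k lt_xs_of[of k n M] lof_BR[OF M, of k] by auto
    qed
    have b: "(k < n \<and> lt (xs_of M n) (Suc k) = BL) \<longleftrightarrow> ed eKA (Suc k) \<in> M"
    proof (cases "k = n")
      case True then show ?thesis using phantomS[OF M] by auto
    next
      case False then show ?thesis using k lt_xs_of[of "Suc k" n M] lof_BL[OF M, of "Suc k"] by auto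
    qed
    show ?thesis unfolding mat_vt vin_def using o a b k unfolding one3_def by auto
  qed
  have ed_eq: "ed t i \<in> M \<longleftrightarrow> ed t i \<in> mat (xs_of M n)" if i: "1 \<le> i" "i \<le> n" for t i
    using unit_char[OF M i, of t] lt_xs_of[OF i, of M] i unfolding mat_ed by auto
  show "M = mat (xs_of M n)"
  proof (intro set_eqI iffI)
    fix e assume e: "e \<in> M"
    then have "e \<in> pyrene_E n" using PMn_sub[OF M] by auto
    then show "e \<in> mat (xs_of M n)" unfolding E_iff using e vt_eq ed_eq by auto
  next
    fix e assume e: "e \<in> mat (xs_of M n)"
    then consider (v) k where "e = vt k" "k \<le> n" | (d) t i where "e = ed t i" "1 \<le> i" "i \<le> n"
      unfolding mat_def by auto
    then show "e \<in> M"
    proof cases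
      case v then show ?thesis using vt_eq e by auto
    next
      case d then show ?thesis using ed_eq e by auto
    qed
  qed
qed

lemma mat_sub: "length xs = n \<Longrightarrow> 1 \<le> n \<Longrightarrow> mat xs \<subseteq> pyrene_E n"
  unfolding mat_def using inE_ed inE_vt by auto

lemma mat_K: assumes "valid xs" "k \<le> length xs"
  shows "one3 (vt k \<in> mat xs) (ed eCK k \<in> mat xs) (ed eKA (Suc k) \<in> mat xs)"
    "one3 (vt k \<in> mat xs) (ed eCKm k \<in> mat xs) (ed eKAm (Suc k) \<in> mat xs)"
  using assms unfolding one3_def mat_vt mat_ed vin_def valid_def inM_CK inM_KA inM_CKm inM_KAm
  by auto

lemma mat_int: assumes "1 \<le> i" "i \<le> length xs"
  shows "one3 (ed eKA i \<in> mat xs) (ed eAB i \<in> mat xs) (ed eAT i \<in> mat xs)"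
    "(ed eAT i \<in> mat xs) \<noteq> (ed eT12 i \<in> mat xs)"
    "(ed eT12 i \<in> mat xs) \<noteq> (ed eT23 i \<in> mat xs)"
    "(ed eT23 i \<in> mat xs) \<noteq> (ed eT3C i \<in> mat xs)"
    "one3 (ed eT3C i \<in> mat xs) (ed eBC i \<in> mat xs) (ed eCK i \<in> mat xs)"
    "one3 (ed eAB i \<in> mat xs) (ed eBC i \<in> mat xs) (ed eBB i \<in> mat xs)"
    "one3 (ed eKAm i \<in> mat xs) (ed eABm i \<in> mat xs) (ed eATm i \<in> mat xs)"
    "(ed eATm i \<in> mat xs) \<noteq> (ed eT12m i \<in> mat xs)"
    "(ed eT12m i \<in> mat xs) \<noteq> (ed eT23m i \<in> mat xs)"
    "(ed eT23m i \<in> mat xs) \<noteq> (ed eT3Cm i \<in> mat xs)"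
    "one3 (ed eT3Cm i \<in> mat xs) (ed eBCm i \<in> mat xs) (ed eCKm i \<in> mat xs)"
    "one3 (ed eABm i \<in> mat xs) (ed eBCm i \<in> mat xs) (ed eBB i \<in> mat xs)"
  using assms unfolding one3_def mat_ed by (cases "lt xs i"; simp)+


lemma mat_unique_K: assumes "valid xs" "length xs = n" "1 \<le> n" "k \<le> n"
  shows "\<exists>!e. e \<in> mat xs \<and> K k \<in> e" "\<exists>!e. e \<in> mat xs \<and> Km k \<in> e"
proof -
  have sub: "mat xs \<subseteq> pyrene_E n" using mat_sub[OF assms(2,3)] .
  show "\<exists>!e. e \<in> mat xs \<and> K k \<in> e"
  proof (rule one3_unique)
    show "one3 (vt k \<in> mat xs) (ed eCK k \<in> mat xs) (ed eKA (Suc k) \<in> mat xs)" using mat_K(1)[OF assms(1), of k] assms by simp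
  qed (use sub inc_K[of _ n k] in \<open>auto simp: vt_def ed.simps\<close>)
  show "\<exists>!e. e \<in> mat xs \<and> Km k \<in> e"
  proof (rule one3_unique)
    show "one3 (vt k \<in> mat xs) (ed eCKm k \<in> mat xs) (ed eKAm (Suc k) \<in> mat xs)" using mat_K(2)[OF assms(1), of k] assms by simp
  qed (use sub inc_Km[of _ n k] in \<open>auto simp: vt_def ed.simps\<close>)
qed

lemma mat_unique_A: assumes "length xs = n" "1 \<le> i" "i \<le> n"
  shows "\<exists>!e. e \<in> mat xs \<and> A i \<in> e"
proof -
  have n1: "1 \<le> n" using assms by linarith
  have sub: "mat xs \<subseteq> pyrene_E n" using mat_sub[OF assms(1) n1] .
  show ?thesis
  proof (rule one3_unique)
    show "one3 (ed eKA i \<in> mat xs) (ed eAB i \<in> mat xs) (ed eAT i \<in> mat xs)" using mat_int(1)[of i xs] assms by simp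
  qed (use sub inc_A[of _ n i] in \<open>auto simp: ed.simps\<close>)
qed

lemma mat_unique_T1: assumes "length xs = n" "1 \<le> i" "i \<le> n"
  shows "\<exists>!e. e \<in> mat xs \<and> T1 i \<in> e"
proof -
  have n1: "1 \<le> n" using assms by linarith
  have sub: "mat xs \<subseteq> pyrene_E n" using mat_sub[OF assms(1) n1] .
  show ?thesis
  proof (rule xor2_unique)
    show "(ed eAT i \<in> mat xs) \<noteq> (ed eT12 i \<in> mat xs)" using mat_int(2)[of i xs] assms by simp
  qed (use sub inc_T1[of _ n i] in \<open>auto simp: ed.simps\<close>)
qed

lemma mat_unique_T2: assumes "length xs = n" "1 \<le> i" "i \<le> n"
  shows "\<exists>!e. e \<in> mat xs \<and> T2 i \<in> e"
proof -
  have n1: "1 \<le> n" using assms by linarith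
  have sub: "mat xs \<subseteq> pyrene_E n" using mat_sub[OF assms(1) n1] .
  show ?thesis
  proof (rule xor2_unique)
    show "(ed eT12 i \<in> mat xs) \<noteq> (ed eT23 i \<in> mat xs)" using mat_int(3)[of i xs] assms by simp
  qed (use sub inc_T2[of _ n i] in \<open>auto simp: ed.simps\<close>)
qed

lemma mat_unique_T3: assumes "length xs = n" "1 \<le> i" "i \<le> n"
  shows "\<exists>!e. e \<in> mat xs \<and> T3 i \<in> e"
proof -
  have n1: "1 \<le> n" using assms by linarith
  have sub: "mat xs \<subseteq> pyrene_E n" using mat_sub[OF assms(1) n1] .
  show ?thesis
  proof (rule xor2_unique)
    show "(ed eT23 i \<in> mat xs) \<noteq> (ed eT3C i \<in> mat xs)" using mat_int(4)[of i xs] assms by simp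
  qed (use sub inc_T3[of _ n i] in \<open>auto simp: ed.simps\<close>)
qed

lemma mat_unique_C: assumes "length xs = n" "1 \<le> i" "i \<le> n"
  shows "\<exists>!e. e \<in> mat xs \<and> C i \<in> e"
proof -
  have n1: "1 \<le> n" using assms by linarith
  have sub: "mat xs \<subseteq> pyrene_E n" using mat_sub[OF assms(1) n1] .
  show ?thesis
  proof (rule one3_unique)
    show "one3 (ed eT3C i \<in> mat xs) (ed eBC i \<in> mat xs) (ed eCK i \<in> mat xs)" using mat_int(5)[of i xs] assms by simp
  qed (use sub inc_C[of _ n i] in \<open>auto simp: ed.simps\<close>)
qed

lemma mat_unique_B: assumes "length xs = n" "1 \<le> i" "i \<le> n"
  shows "\<exists>!e. e \<in> mat xs \<and> B i \<in> e"
proof -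
  have n1: "1 \<le> n" using assms by linarith
  have sub: "mat xs \<subseteq> pyrene_E n" using mat_sub[OF assms(1) n1] .
  show ?thesis
  proof (rule one3_unique)
    show "one3 (ed eAB i \<in> mat xs) (ed eBC i \<in> mat xs) (ed eBB i \<in> mat xs)" using mat_int(6)[of i xs] assms by simp
  qed (use sub inc_B[of _ n i] in \<open>auto simp: ed.simps\<close>)
qed

lemma mat_unique_Am: assumes "length xs = n" "1 \<le> i" "i \<le> n"
  shows "\<exists>!e. e \<in> mat xs \<and> Am i \<in> e"
proof -
  have n1: "1 \<le> n" using assms by linarith
  have sub: "mat xs \<subseteq> pyrene_E n" using mat_sub[OF assms(1) n1] .
  show ?thesis
  proof (rule one3_unique)
    show "one3 (ed eKAm i \<in> mat xs) (ed eABm i \<in> mat xs) (ed eATm i \<in> mat xs)" using mat_int(7)[of i xs] assms by simp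
  qed (use sub inc_Am[of _ n i] in \<open>auto simp: ed.simps\<close>)
qed

lemma mat_unique_T1m: assumes "length xs = n" "1 \<le> i" "i \<le> n"
  shows "\<exists>!e. e \<in> mat xs \<and> T1m i \<in> e"
proof -
  have n1: "1 \<le> n" using assms by linarith
  have sub: "mat xs \<subseteq> pyrene_E n" using mat_sub[OF assms(1) n1] .
  show ?thesis
  proof (rule xor2_unique)
    show "(ed eATm i \<in> mat xs) \<noteq> (ed eT12m i \<in> mat xs)" using mat_int(8)[of i xs] assms by simp
  qed (use sub inc_T1m[of _ n i] in \<open>auto simp: ed.simps\<close>)
qed

lemma mat_unique_T2m: assumes "length xs = n" "1 \<le> i" "i \<le> n"
  shows "\<exists>!e. e \<in> mat xs \<and> T2m i \<in> e"
proof -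
  have n1: "1 \<le> n" using assms by linarith
  have sub: "mat xs \<subseteq> pyrene_E n" using mat_sub[OF assms(1) n1] .
  show ?thesis
  proof (rule xor2_unique)
    show "(ed eT12m i \<in> mat xs) \<noteq> (ed eT23m i \<in> mat xs)" using mat_int(9)[of i xs] assms by simp
  qed (use sub inc_T2m[of _ n i] in \<open>auto simp: ed.simps\<close>)
qed

lemma mat_unique_T3m: assumes "length xs = n" "1 \<le> i" "i \<le> n"
  shows "\<exists>!e. e \<in> mat xs \<and> T3m i \<in> e"
proof -
  have n1: "1 \<le> n" using assms by linarith
  have sub: "mat xs \<subseteq> pyrene_E n" using mat_sub[OF assms(1) n1] .
  show ?thesis
  proof (rule xor2_unique)
    show "(ed eT23m i \<in> mat xs) \<noteq> (ed eT3Cm i \<in> mat xs)" using mat_int(10)[of i xs] assms by simp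
  qed (use sub inc_T3m[of _ n i] in \<open>auto simp: ed.simps\<close>)
qed

lemma mat_unique_Cm: assumes "length xs = n" "1 \<le> i" "i \<le> n"
  shows "\<exists>!e. e \<in> mat xs \<and> Cm i \<in> e"
proof -
  have n1: "1 \<le> n" using assms by linarith
  have sub: "mat xs \<subseteq> pyrene_E n" using mat_sub[OF assms(1) n1] .
  show ?thesis
  proof (rule one3_unique)
    show "one3 (ed eT3Cm i \<in> mat xs) (ed eBCm i \<in> mat xs) (ed eCKm i \<in> mat xs)" using mat_int(11)[of i xs] assms by simp
  qed (use sub inc_Cm[of _ n i] in \<open>auto simp: ed.simps\<close>)
qed

lemma mat_unique_Bm: assumes "length xs = n" "1 \<le> i" "i \<le> n"
  shows "\<exists>!e. e \<in> mat xs \<and> Bm i \<in> e"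
proof -
  have n1: "1 \<le> n" using assms by linarith
  have sub: "mat xs \<subseteq> pyrene_E n" using mat_sub[OF assms(1) n1] .
  show ?thesis
  proof (rule one3_unique)
    show "one3 (ed eABm i \<in> mat xs) (ed eBCm i \<in> mat xs) (ed eBB i \<in> mat xs)" using mat_int(12)[of i xs] assms by simp
  qed (use sub inc_Bm[of _ n i] in \<open>auto simp: ed.simps\<close>)
qed

lemma mat_pm: assumes "valid xs" "length xs = n" "1 \<le> n"
  shows "mat xs \<in> PMn n"
  unfolding PMn_def perfect_matchings_def
proof (intro CollectI conjI ballI)
  show "mat xs \<subseteq> pyrene_E n" using mat_sub assms(2,3) by auto
  fix v assume "v \<in> pyrene_V n"
  then obtain i where i: "1 \<le> i" "i \<le> n" "v \<in> unitV i" unfolding V_iff by blast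
  from i(3) show "\<exists>!e. e \<in> mat xs \<and> v \<in> e" unfolding unitV_def
    using mat_unique_K[OF assms, of "i-1"] mat_unique_K[OF assms, of i]
      mat_unique_A[OF assms(2) i(1,2)] mat_unique_Am[OF assms(2) i(1,2)]
      mat_unique_B[OF assms(2) i(1,2)] mat_unique_Bm[OF assms(2) i(1,2)]
      mat_unique_C[OF assms(2) i(1,2)] mat_unique_Cm[OF assms(2) i(1,2)]
      mat_unique_T1[OF assms(2) i(1,2)] mat_unique_T1m[OF assms(2) i(1,2)]
      mat_unique_T2[OF assms(2) i(1,2)] mat_unique_T2m[OF assms(2) i(1,2)]
      mat_unique_T3[OF assms(2) i(1,2)] mat_unique_T3m[OF assms(2) i(1,2)] i
    by (elim insertE emptyE) auto
qed

lemma PM_char: assumes "1 \<le> n"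
  shows "PMn n = mat ` {xs. length xs = n \<and> valid xs}"
proof
  show "PMn n \<subseteq> mat ` {xs. length xs = n \<and> valid xs}"
  proof
    fix M assume M: "M \<in> PMn n"
    show "M \<in> mat ` {xs. length xs = n \<and> valid xs}"
      using pm_is_mat[OF M assms] by (intro image_eqI[of _ _ "xs_of M n"]) auto
  qed
  show "mat ` {xs. length xs = n \<and> valid xs} \<subseteq> PMn n"
    using mat_pm assms by auto
qed

lemma mat_inj: assumes "length xs = length ys" "mat xs = mat ys" shows "xs = ys"
proof (rule nth_equalityI)
  show "length xs = length ys" by fact
  fix j assume j: "j < length xs"
  have "inM t (lt xs (Suc j)) = inM t (lt ys (Suc j))" for t
    using assms(2) mat_ed[of t "Suc j" xs] mat_ed[of t "Suc j" ys] j assms(1) by auto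
  then have "lt xs (Suc j) = lt ys (Suc j)" by (rule inM_inj)
  then show "xs ! j = ys ! j" by (simp add: lt_def)
qed

fun inS :: "et \<Rightarrow> letter \<Rightarrow> bool" where
  "inS t (D p q) = (t = (if p then eAB else eBC) \<or> t = (if q then eABm else eBCm))"
| "inS t BL = (t = eKA)"
| "inS t BR = (t = eCK)"

lemma inS_inM: "inS t l \<Longrightarrow> inM t l"
  by (cases l) (auto split: if_splits)

lemma inS_det: assumes "\<And>t. inS t l \<Longrightarrow> inM t l'" shows "l = l'"
proof (cases l)
  case (D p q)
  have a: "inM (if p then eAB else eBC) l'" "inM (if q then eABm else eBCm) l'" using assms D by auto
  then show ?thesis using D by (cases l'; cases p; cases q) auto
next
  case BL then show ?thesis using assms[of eKA] by (cases l') auto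
next
  case BR then show ?thesis using assms[of eCK] by (cases l') auto
qed

definition sc :: "letter \<Rightarrow> nat" where "sc l = (case l of D _ _ \<Rightarrow> 2 | _ \<Rightarrow> 1)"

lemma card_inS: "card {t. inS t l} = sc l"
proof (cases l)
  case (D p q)
  then have "{t. inS t l} = {if p then eAB else eBC, if q then eABm else eBCm}" by auto
  then show ?thesis using D by (simp add: sc_def)
qed (simp_all add: sc_def)

definition fs :: "letter list \<Rightarrow> vert set set" where
  "fs xs = {ed t i | t i. 1 \<le> i \<and> i \<le> length xs \<and> inS t (lt xs i)}"

definition JJ :: "letter list \<Rightarrow> (nat \<times> et) set" where
  "JJ xs = Sigma {1..length xs} (\<lambda>i. {t. inS t (lt xs i)})"

lemma finite_inS: "finite {t. inS t l}"
  by (cases l) auto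

lemma card_JJ: "card (JJ xs) = sum_list (map sc xs)"
proof -
  have "card (JJ xs) = (\<Sum>i\<in>{1..length xs}. sc (lt xs i))"
    unfolding JJ_def using finite_inS by (simp add: card_SigmaI card_inS)
  also have "\<dots> = (\<Sum>j<length xs. sc (xs ! j))"
  proof -
    have "(\<Sum>i\<in>{1..length xs}. sc (lt xs i)) = (\<Sum>j\<in>{0..<length xs}. sc (lt xs (Suc j)))"
      by (rule sum.reindex_bij_witness[of _ Suc "\<lambda>i. i - 1"]) auto
    then show ?thesis by (simp add: lt_def lessThan_atLeast0)
  qed
  also have "\<dots> = sum_list (map sc xs)"
    by (simp add: sum_list_sum_nth atLeast0LessThan)
  finally show ?thesis .
qed

lemma fs_img: "fs xs = (\<lambda>(i,t). ed t i) ` JJ xs"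
  unfolding fs_def JJ_def by (auto simp: ed_inj')

lemma card_fs: "card (fs xs) = sum_list (map sc xs)"
proof -
  have "inj_on (\<lambda>(i,t). ed t i) (JJ xs)"
    by (auto simp: inj_on_def ed_inj')
  then show ?thesis unfolding fs_img card_JJ[symmetric] by (rule card_image)
qed

lemma fs_mem: "ed t i \<in> fs xs \<longleftrightarrow> 1 \<le> i \<and> i \<le> length xs \<and> inS t (lt xs i)"
  unfolding fs_def by (auto simp: ed_inj')

lemma fs_sub: "fs xs \<subseteq> mat xs"
  unfolding fs_def using inS_inM mat_ed by auto

lemma finite_hexE: "finite (hex_edges c)"
  by (cases c) (simp add: hex_edges_eq)

lemma finite_E: "finite (pyrene_E n)"
  unfolding pyrene_E_def pyrene_hexagons_def by (simp add: finite_hexE)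

lemma PMn_finite_M: "M \<in> PMn n \<Longrightarrow> finite M"
  using PMn_sub finite_E finite_subset by blast

lemma fs_forcing: assumes "valid xs" "length xs = n" "1 \<le> n"
  shows "forcing_set (pyrene_V n) (pyrene_E n) (mat xs) (fs xs)"
  unfolding forcing_set_def
proof (intro conjI ballI impI)
  show "fs xs \<subseteq> mat xs" by (rule fs_sub)
  fix M' assume M': "M' \<in> perfect_matchings (pyrene_V n) (pyrene_E n)" and s: "fs xs \<subseteq> M'"
  then obtain ys where ys: "length ys = n" "valid ys" "M' = mat ys"
    using PM_char[OF assms(3)] unfolding PMn_def by auto
  have "xs = ys"
  proof (rule nth_equalityI)
    show "length xs = length ys" using ys assms by simp
    fix j assume j: "j < length xs"
    have "lt xs (Suc j) = lt ys (Suc j)"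
    proof (rule inS_det)
      fix t assume "inS t (lt xs (Suc j))"
      then have "ed t (Suc j) \<in> fs xs" unfolding fs_mem using j by auto
      then have "ed t (Suc j) \<in> mat ys" using s ys by auto
      then show "inM t (lt ys (Suc j))" unfolding mat_ed by auto
    qed
    then show "xs ! j = ys ! j" by (simp add: lt_def)
  qed
  then show "M' = mat xs" using ys by simp
qed

fun flip :: "et \<Rightarrow> letter \<Rightarrow> letter" where
  "flip t (D p q) = (if t = eAB \<or> t = eBC then D (\<not>p) q else D p (\<not>q))"
| "flip t BL = D True True"
| "flip t BR = D False False"

lemma flip_ne: "flip t l \<noteq> l" by (cases l) auto

lemma flip_D: "\<exists>p q. flip t l = D p q" by (cases l) auto

lemma lt_upd: "1 \<le> i \<Longrightarrow> 1 \<le> j \<Longrightarrow> j \<le> length xs \<Longrightarrow> lt (xs[i-1 := x]) j = (if j = i then x else lt xs j)"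
  by (auto simp: lt_def nth_list_update)

lemma valid_upd: assumes "valid xs" "1 \<le> i" "i \<le> length xs" shows "valid (xs[i-1 := D p q])"
  unfolding valid_def
proof (intro allI impI notI)
  fix j assume j: "1 \<le> j \<and> j < length (xs[i-1 := D p q])"
    and b: "lt (xs[i-1 := D p q]) j = BR \<and> lt (xs[i-1 := D p q]) (Suc j) = BL"
  have l1: "lt (xs[i-1 := D p q]) j = (if j = i then D p q else lt xs j)" using lt_upd[OF assms(2), of j xs] j by auto
  have l2: "lt (xs[i-1 := D p q]) (Suc j) = (if Suc j = i then D p q else lt xs (Suc j))" using lt_upd[OF assms(2), of "Suc j" xs] j by auto
  show False using b l1 l2 assms(1) j unfolding valid_def by (auto split: if_splits)
qed

lemma diff_edges: assumes i: "1 \<le> i" "i \<le> length xs" and e: "e \<in> mat xs" "e \<notin> mat (xs[i-1 := D p q])"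
  shows "\<exists>u. e = ed u i \<and> inM u (lt xs i) \<and> \<not> inM u (D p q)"
proof -
  let ?ys = "xs[i-1 := D p q]"
  from e(1) consider (v) k where "e = vt k" "k \<le> length xs" "vin xs k" | (d) u j where "e = ed u j" "1 \<le> j" "j \<le> length xs" "inM u (lt xs j)"
    unfolding mat_def by auto
  then show ?thesis
  proof cases
    case v
    have "vin ?ys k"
    proof -
      have a: "1 \<le> k \<and> k \<le> length xs \<longrightarrow> lt ?ys k = (if k = i then D p q else lt xs k)"
        using lt_upd[OF i(1), of k xs] by auto
      have b: "k < length xs \<longrightarrow> lt ?ys (Suc k) = (if Suc k = i then D p q else lt xs (Suc k))"
        using lt_upd[OF i(1), of "Suc k" xs] by auto
      show ?thesis using v(3) a b unfolding vin_def by auto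
    qed
    then have "e \<in> mat ?ys" using v by (simp add: mat_vt)
    then show ?thesis using e(2) by simp
  next
    case d
    have l: "lt ?ys j = (if j = i then D p q else lt xs j)" using lt_upd[OF i(1) d(2,3)] .
    show ?thesis
    proof (cases "j = i")
      case True
      have "ed u i \<notin> mat ?ys" using e(2) d True by simp
      then have "\<not> inM u (lt ?ys i)" using i by (simp add: mat_ed)
      then have "\<not> inM u (D p q)" using l True by simp
      then show ?thesis using d True by auto
    next
      case False
      then have "e \<in> mat ?ys" using d l by (simp add: mat_ed)
      then show ?thesis using e(2) by simp
    qed
  qed
qed

lemma key_flip: "inM u (D p q) \<Longrightarrow> \<not> inM u (D (\<not>p) q) \<Longrightarrow> \<not> inM u (D p (\<not>q)) \<Longrightarrow> False"
  by (cases u) auto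

lemma disj_flip: assumes "inS t l" "inS t' l" "t \<noteq> t'" "inM u l" "\<not> inM u (flip t l)" "\<not> inM u (flip t' l)"
  shows False
proof (cases l)
  case (D p q)
  define top where "top = (if p then eAB else eBC)"
  define bot where "bot = (if q then eABm else eBCm)"
  have tb: "t = top \<or> t = bot" "t' = top \<or> t' = bot" using assms(1,2) D unfolding top_def bot_def by auto
  have ftop: "flip top l = D (\<not>p) q" unfolding top_def D by simp
  have fbot: "flip bot l = D p (\<not>q)" unfolding bot_def D by simp
  have "(flip t l = D (\<not>p) q \<and> flip t' l = D p (\<not>q)) \<or> (flip t l = D p (\<not>q) \<and> flip t' l = D (\<not>p) q)"
    using tb assms(3) ftop fbot by auto
  then show False using key_flip[of u p q] assms(4,5,6) D by auto
qed (use assms in auto)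


lemma card_lower:
  assumes "finite S" "\<And>j. j \<in> J \<Longrightarrow> S \<inter> X j \<noteq> {}"
    "\<And>j j'. j \<in> J \<Longrightarrow> j' \<in> J \<Longrightarrow> j \<noteq> j' \<Longrightarrow> X j \<inter> X j' = {}"
  shows "card J \<le> card S"
proof -
  define f where "f j = (SOME e. e \<in> S \<inter> X j)" for j
  have f: "f j \<in> S \<inter> X j" if "j \<in> J" for j
  proof -
    have "\<exists>e. e \<in> S \<inter> X j" using assms(2)[OF that] by blast
    then show ?thesis unfolding f_def by (rule someI_ex)
  qed
  have "inj_on f J"
  proof (rule inj_onI)
    fix j j' assume jj: "j \<in> J" "j' \<in> J" "f j = f j'"
    show "j = j'"
    proof (rule ccontr)
      assume "j \<noteq> j'"
      then have "X j \<inter> X j' = {}" using assms(3) jj by simp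
      moreover have "f j \<in> X j" using f[OF jj(1)] by blast
      moreover have "f j \<in> X j'" using f[OF jj(2)] jj(3) by simp
      ultimately show False by blast
    qed
  qed
  moreover have "f ` J \<subseteq> S" using f by auto
  ultimately show ?thesis using card_inj_on_le assms(1) by blast
qed

lemma forcing_lower: assumes xs: "valid xs" "length xs = n" "1 \<le> n"
  and S: "forcing_set (pyrene_V n) (pyrene_E n) (mat xs) S"
  shows "sum_list (map sc xs) \<le> card S"
proof -
  have Ssub: "S \<subseteq> mat xs" using S unfolding forcing_set_def by blast
  have forc: "\<And>M'. M' \<in> perfect_matchings (pyrene_V n) (pyrene_E n) \<Longrightarrow> S \<subseteq> M' \<Longrightarrow> M' = mat xs"
    using S unfolding forcing_set_def by blast
  have fin: "finite S" using Ssub PMn_finite_M[OF mat_pm[OF xs]] finite_subset by blast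
  define X where "X j = mat xs - mat (xs[fst j - 1 := flip (snd j) (lt xs (fst j))])" for j
  have "card (JJ xs) \<le> card S"
  proof (rule card_lower[OF fin, of _ X])
    fix j assume j: "j \<in> JJ xs"
    obtain i t where it: "j = (i,t)" by (cases j)
    have i: "1 \<le> i" "i \<le> n" "inS t (lt xs i)" using j it xs unfolding JJ_def by auto
    obtain p q where pq: "flip t (lt xs i) = D p q" using flip_D by blast
    define ys where "ys = xs[i-1 := D p q]"
    have Xj: "X j = mat xs - mat ys" unfolding X_def it ys_def using pq by simp
    show "S \<inter> X j \<noteq> {}"
    proof
      assume "S \<inter> X j = {}"
      then have "S \<subseteq> mat ys" using Ssub unfolding Xj by blast
      moreover have "mat ys \<in> perfect_matchings (pyrene_V n) (pyrene_E n)"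
      proof -
        have "valid ys" unfolding ys_def using valid_upd[OF xs(1) i(1)] i(2) xs(2) by simp
        moreover have "length ys = n" unfolding ys_def using xs(2) by simp
        ultimately show ?thesis using mat_pm xs(3) unfolding PMn_def by blast
      qed
      ultimately have "mat ys = mat xs" using forc by blast
      then have "ys = xs" using mat_inj[of ys xs] unfolding ys_def by simp
      then have "lt ys i = lt xs i" by simp
      moreover have "lt ys i = D p q" unfolding ys_def using lt_upd[OF i(1) i(1), of xs "D p q"] i(2) xs(2) by simp
      ultimately show False using pq flip_ne by metis
    qed
  next
    fix j j' assume j: "j \<in> JJ xs" and j': "j' \<in> JJ xs" and ne: "j \<noteq> j'"
    obtain i t where it: "j = (i,t)" by (cases j)
    obtain i' t' where it': "j' = (i',t')" by (cases j')
    have i: "1 \<le> i" "i \<le> n" "inS t (lt xs i)" using j it xs unfolding JJ_def by auto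
    have i': "1 \<le> i'" "i' \<le> n" "inS t' (lt xs i')" using j' it' xs unfolding JJ_def by auto
    obtain p q where pq: "flip t (lt xs i) = D p q" using flip_D by blast
    obtain p' q' where pq': "flip t' (lt xs i') = D p' q'" using flip_D by blast
    have Xj: "X j = mat xs - mat (xs[i-1 := D p q])" unfolding X_def it using pq by simp
    have Xj': "X j' = mat xs - mat (xs[i'-1 := D p' q'])" unfolding X_def it' using pq' by simp
    show "X j \<inter> X j' = {}"
    proof (rule ccontr)
      assume "X j \<inter> X j' \<noteq> {}"
      then obtain e where e: "e \<in> mat xs" "e \<notin> mat (xs[i-1 := D p q])" "e \<notin> mat (xs[i'-1 := D p' q'])"
        unfolding Xj Xj' by blast
      obtain u where u: "e = ed u i" "inM u (lt xs i)" "\<not> inM u (D p q)"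
        using diff_edges[OF i(1) _ e(1,2)] i(2) xs(2) by blast
      obtain u' where u': "e = ed u' i'" "inM u' (lt xs i')" "\<not> inM u' (D p' q')"
        using diff_edges[OF i'(1) _ e(1,3)] i'(2) xs(2) by blast
      have uu: "u = u'" "i = i'" using u(1) u'(1) ed_inj' by auto
      then have tt: "t \<noteq> t'" using ne it it' by simp
      have a: "\<not> inM u (flip t (lt xs i))" using u(3) pq by simp
      have b: "\<not> inM u (flip t' (lt xs i))" using u'(3) pq' uu by simp
      show False using disj_flip[OF i(3) _ tt u(2) a b] i'(3) uu(2) by simp
    qed
  qed
  then show ?thesis using card_JJ by simp
qed

lemma fn_eq: assumes "valid xs" "length xs = n" "1 \<le> n"
  shows "forcing_number (pyrene_V n) (pyrene_E n) (mat xs) = sum_list (map sc xs)"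
  unfolding forcing_number_def
proof (rule Min_eqI)
  have "{card S |S. forcing_set (pyrene_V n) (pyrene_E n) (mat xs) S} \<subseteq> card ` Pow (mat xs)"
    unfolding forcing_set_def by auto
  moreover have "finite (mat xs)" using PMn_finite_M[OF mat_pm[OF assms]] .
  ultimately show "finite {card S |S. forcing_set (pyrene_V n) (pyrene_E n) (mat xs) S}"
    using finite_subset by blast
  show "\<And>y. y \<in> {card S |S. forcing_set (pyrene_V n) (pyrene_E n) (mat xs) S} \<Longrightarrow> sum_list (map sc xs) \<le> y"
    using forcing_lower[OF assms] by auto
  show "sum_list (map sc xs) \<in> {card S |S. forcing_set (pyrene_V n) (pyrene_E n) (mat xs) S}"
    unfolding mem_Collect_eq using fs_forcing[OF assms] card_fs[of xs] by (intro exI[of _ "fs xs"]) simp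
qed

definition W :: "nat \<Rightarrow> letter list set" where
  "W n = {xs. length xs = n \<and> valid xs}"

lemma Phi_W: "1 \<le> n \<Longrightarrow> Phi (pyrene_V n) (pyrene_E n) = card (W n)"
proof -
  assume n: "1 \<le> n"
  have "inj_on mat (W n)" unfolding W_def by (auto intro!: inj_onI mat_inj)
  then show ?thesis unfolding Phi_def PMn_def[symmetric] PM_char[OF n] W_def[symmetric]
    by (rule card_image)
qed

lemma IDF_W: "1 \<le> n \<Longrightarrow> IDF (pyrene_V n) (pyrene_E n) = (\<Sum>xs\<in>W n. sum_list (map sc xs))"
proof -
  assume n: "1 \<le> n"
  have inj: "inj_on mat (W n)" unfolding W_def by (auto intro!: inj_onI mat_inj)
  have "IDF (pyrene_V n) (pyrene_E n) = (\<Sum>M\<in>mat ` W n. forcing_number (pyrene_V n) (pyrene_E n) M)"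
    unfolding IDF_def PMn_def[symmetric] PM_char[OF n] W_def[symmetric] ..
  also have "\<dots> = (\<Sum>xs\<in>W n. forcing_number (pyrene_V n) (pyrene_E n) (mat xs))"
    by (rule sum.reindex[OF inj, unfolded comp_def])
  also have "\<dots> = (\<Sum>xs\<in>W n. sum_list (map sc xs))"
  proof (rule sum.cong)
    fix xs assume "xs \<in> W n"
    then show "forcing_number (pyrene_V n) (pyrene_E n) (mat xs) = sum_list (map sc xs)"
      using fn_eq[of xs n] n by (simp add: W_def)
  qed simp
  finally show ?thesis .
qed

definition sBL :: "letter list \<Rightarrow> bool" where "sBL r \<longleftrightarrow> r \<noteq> [] \<and> hd r = BL"

definition Lset :: "letter set" where "Lset = {D True True, D True False, D False True, D False False, BL, BR}"

lemma in_Lset: "x \<in> Lset"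
  unfolding Lset_def by (cases x) auto

lemma lt_Cons_1: "lt (x # r) 1 = x" "lt (x # r) (Suc 0) = x" by (simp_all add: lt_def)
lemma lt_Cons_Suc: "1 \<le> j \<Longrightarrow> lt (x # r) (Suc j) = lt r j" by (cases j) (auto simp: lt_def)

lemma valid_Cons: "valid (x # r) \<longleftrightarrow> valid r \<and> \<not>(x = BR \<and> sBL r)"
proof
  assume v: "valid (x # r)"
  have "valid r" unfolding valid_def
  proof (intro allI impI)
    fix i assume i: "1 \<le> i \<and> i < length r"
    have "\<not>(lt (x#r) (Suc i) = BR \<and> lt (x#r) (Suc (Suc i)) = BL)" using v i unfolding valid_def by auto
    then show "\<not>(lt r i = BR \<and> lt r (Suc i) = BL)" using i by (simp add: lt_Cons_Suc)
  qed
  moreover have "\<not>(x = BR \<and> sBL r)"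
  proof
    assume a: "x = BR \<and> sBL r"
    then have "r \<noteq> []" unfolding sBL_def by auto
    then have "\<not>(lt (x#r) 1 = BR \<and> lt (x#r) (Suc 1) = BL)" using v unfolding valid_def by auto
    moreover have "lt (x#r) (Suc 1) = hd r" using \<open>r \<noteq> []\<close> by (cases r) (auto simp: lt_def)
    ultimately show False using a unfolding sBL_def by (simp add: lt_Cons_1)
  qed
  ultimately show "valid r \<and> \<not>(x = BR \<and> sBL r)" by blast
next
  assume a: "valid r \<and> \<not>(x = BR \<and> sBL r)"
  show "valid (x # r)" unfolding valid_def
  proof (intro allI impI notI)
    fix i assume i: "1 \<le> i \<and> i < length (x # r)" and b: "lt (x # r) i = BR \<and> lt (x # r) (Suc i) = BL"
    show False
    proof (cases "i = 1")
      case True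
      then have "r \<noteq> []" using i by auto
      then have "lt (x#r) (Suc 1) = hd r" by (cases r) (auto simp: lt_def)
      then show False using a b True \<open>r \<noteq> []\<close> unfolding sBL_def by (simp add: lt_Cons_1)
    next
      case False
      then obtain j where j: "i = Suc j" "1 \<le> j" using i by (cases i) auto
      have "lt r j = BR \<and> lt r (Suc j) = BL" using b j by (simp add: lt_Cons_Suc)
      then show False using a j i unfolding valid_def by auto
    qed
  qed
qed

definition R :: "nat \<Rightarrow> letter \<Rightarrow> letter list set" where
  "R n x = {r \<in> W n. \<not>(x = BR \<and> sBL r)}"

lemma W_0: "W 0 = {[]}" by (auto simp: W_def valid_def)

lemma W_Suc: "W (Suc n) = (\<lambda>(x,r). x # r) ` (Sigma Lset (R n))"
proof
  show "W (Suc n) \<subseteq> (\<lambda>(x,r). x # r) ` (Sigma Lset (R n))"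
  proof
    fix xs assume xs: "xs \<in> W (Suc n)"
    then obtain x r where xr: "xs = x # r" unfolding W_def by (cases xs) auto
    then have "(x, r) \<in> Sigma Lset (R n)" using xs in_Lset unfolding W_def R_def by (auto simp: valid_Cons)
    then show "xs \<in> (\<lambda>(x,r). x # r) ` (Sigma Lset (R n))" using xr by force
  qed
  show "(\<lambda>(x,r). x # r) ` (Sigma Lset (R n)) \<subseteq> W (Suc n)"
    unfolding W_def R_def by (auto simp: valid_Cons)
qed

lemma finite_W: "finite (W n)"
proof (induction n)
  case 0 then show ?case by (simp add: W_0)
next
  case (Suc n)
  have "finite Lset" unfolding Lset_def by simp
  moreover have "\<And>x. finite (R n x)" unfolding R_def using Suc by simp
  ultimately show ?case unfolding W_Suc by (intro finite_imageI finite_SigmaI) auto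
qed

lemma sum_W_Suc: "(\<Sum>xs\<in>W (Suc n). g xs) = (\<Sum>x\<in>Lset. \<Sum>r\<in>R n x. g (x # r))"
proof -
  have inj: "inj_on (\<lambda>(x,r). x # r) (Sigma Lset (R n))" by (auto simp: inj_on_def)
  have "(\<Sum>xs\<in>W (Suc n). g xs) = (\<Sum>p\<in>Sigma Lset (R n). g ((\<lambda>(x,r). x # r) p))"
    unfolding W_Suc by (rule sum.reindex[OF inj, unfolded comp_def])
  also have "\<dots> = (\<Sum>x\<in>Lset. \<Sum>r\<in>R n x. g (x # r))"
  proof -
    have "finite Lset" unfolding Lset_def by simp
    moreover have "\<And>x. finite (R n x)" unfolding R_def using finite_W by simp
    ultimately show ?thesis by (subst sum.Sigma) (auto simp: case_prod_beta)
  qed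
  finally show ?thesis .
qed

definition SS :: "nat \<Rightarrow> (letter list \<Rightarrow> real) \<Rightarrow> real" where
  "SS n g = (\<Sum>xs\<in>W n. g xs)"
definition TT :: "nat \<Rightarrow> (letter list \<Rightarrow> real) \<Rightarrow> real" where
  "TT n g = (\<Sum>xs\<in>W n. if sBL xs then g xs else 0)"

lemma sum_R: "(\<Sum>r\<in>R n x. h r) = SS n h - (if x = BR then TT n h else 0)"
proof (cases "x = BR")
  case True
  have "(\<Sum>r\<in>R n x. h r) = (\<Sum>r\<in>W n. if \<not> sBL r then h r else 0)"
    unfolding R_def True using finite_W by (simp add: sum.inter_filter)
  also have "\<dots> = SS n h - TT n h"
    unfolding SS_def TT_def sum_subtractf[symmetric] by (rule sum.cong) auto
  finally show ?thesis using True by simp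
next
  case False
  then show ?thesis unfolding R_def SS_def by simp
qed

lemma sum_Lset: "(\<Sum>x\<in>Lset. h x) = h (D True True) + h (D True False) + h (D False True) + h (D False False) + h BL + h BR"
  unfolding Lset_def by (simp add: add.assoc)

lemma SS_Suc: "SS (Suc n) g = (\<Sum>x\<in>Lset. SS n (\<lambda>r. g (x # r))) - TT n (\<lambda>r. g (BR # r))"
  unfolding SS_def[of "Suc n"] sum_W_Suc sum_R by (simp add: sum_Lset)

lemma TT_Suc: "TT (Suc n) g = SS n (\<lambda>r. g (BL # r))"
proof -
  have "TT (Suc n) g = (\<Sum>x\<in>Lset. \<Sum>r\<in>R n x. if sBL (x # r) then g (x # r) else 0)"
    unfolding TT_def sum_W_Suc ..
  also have "\<dots> = (\<Sum>r\<in>R n BL. g (BL # r))"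
    by (simp add: sum_Lset sBL_def)
  also have "\<dots> = SS n (\<lambda>r. g (BL # r))" using sum_R[where n=n and x=BL] by simp
  finally show ?thesis .
qed

definition aa :: "nat \<Rightarrow> real" where "aa n = SS n (\<lambda>_. 1)"
definition bb :: "nat \<Rightarrow> real" where "bb n = TT n (\<lambda>_. 1)"
definition FF :: "nat \<Rightarrow> real" where "FF n = SS n (\<lambda>xs. real (sum_list (map sc xs)))"
definition GG :: "nat \<Rightarrow> real" where "GG n = TT n (\<lambda>xs. real (sum_list (map sc xs)))"

lemma SS_add_const: "SS n (\<lambda>r. c + g r) = c * aa n + SS n g"
  unfolding SS_def aa_def by (simp add: sum.distrib sum_distrib_left)
lemma TT_add_const: "TT n (\<lambda>r. c + g r) = c * bb n + TT n g"
  unfolding TT_def bb_def sum_distrib_left sum.distrib[symmetric] by (rule sum.cong) auto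

lemma aa_Suc: "aa (Suc n) = 6 * aa n - bb n"
  unfolding aa_def bb_def SS_Suc sum_Lset by simp
lemma bb_Suc: "bb (Suc n) = aa n"
  unfolding aa_def bb_def TT_Suc by simp
lemma FF_Suc: "FF (Suc n) = 10 * aa n - bb n + 6 * FF n - GG n"
  unfolding FF_def GG_def SS_Suc sum_Lset by (simp add: sc_def SS_add_const TT_add_const)
lemma GG_Suc: "GG (Suc n) = aa n + FF n"
  unfolding FF_def GG_def TT_Suc by (simp add: sc_def SS_add_const)

lemma aa_0: "aa 0 = 1" and bb_0: "bb 0 = 0" and FF_0: "FF 0 = 0" and GG_0: "GG 0 = 0"
  by (simp_all add: aa_def bb_def FF_def GG_def SS_def TT_def W_0 sBL_def)

definition lam :: real where "lam = 3 + 2 * sqrt 2"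
definition mu :: real where "mu = 3 - 2 * sqrt 2"

lemma s2: "sqrt 2 * sqrt 2 = (2::real)" by simp

lemma lam_sq: "lam * lam = 6 * lam - 1"
  unfolding lam_def by (simp add: algebra_simps s2)
lemma mu_sq: "mu * mu = 6 * mu - 1"
  unfolding mu_def by (simp add: algebra_simps s2)
lemma lam_mu: "lam - mu = 4 * sqrt 2"
  unfolding lam_def mu_def by simp
lemma lam_pos: "lam > 0" unfolding lam_def using real_sqrt_ge_zero[of 2] by linarith
lemma lam_ne_mu: "lam \<noteq> mu" using lam_mu real_sqrt_gt_zero[of 2] by linarith
lemma sqrt2_lt: "sqrt 2 < (3/2::real)"
proof -
  have "sqrt 2 < sqrt ((3/2)^2)" by (rule real_sqrt_less_mono) (simp add: power2_eq_square)
  then show ?thesis by simp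
qed
lemma mu_pos: "mu > 0" unfolding mu_def using sqrt2_lt by simp
lemma mu_lt_lam: "mu < lam" unfolding lam_def mu_def by simp

lemma closed_form:
  fixes y :: "nat \<Rightarrow> real"
  assumes rec: "\<And>n. y (Suc (Suc n)) = 6 * y (Suc n) - y n"
  shows "y n = (y 1 - mu * y 0) / (lam - mu) * lam ^ n + (lam * y 0 - y 1) / (lam - mu) * mu ^ n"
proof -
  define c1 where "c1 = (y 1 - mu * y 0) / (lam - mu)"
  define c2 where "c2 = (lam * y 0 - y 1) / (lam - mu)"
  have d: "lam - mu \<noteq> 0" using lam_ne_mu by simp
  have "y n = c1 * lam ^ n + c2 * mu ^ n \<and> y (Suc n) = c1 * lam ^ Suc n + c2 * mu ^ Suc n"
  proof (induction n)
    case 0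
    have e1: "(y 1 - mu * y 0) + (lam * y 0 - y 1) = (lam - mu) * y 0" by (simp add: algebra_simps)
    have "y 0 = c1 + c2" unfolding c1_def c2_def add_divide_distrib[symmetric] e1 using d by simp
    moreover
    have e2: "(y 1 - mu * y 0) * lam + (lam * y 0 - y 1) * mu = (lam - mu) * y 1" by (simp add: algebra_simps)
    have "y 1 = c1 * lam + c2 * mu" unfolding c1_def c2_def times_divide_eq_left add_divide_distrib[symmetric] e2
      using d by simp
    ultimately show ?case by simp
  next
    case (Suc n)
    have "y (Suc (Suc n)) = 6 * (c1 * lam ^ Suc n + c2 * mu ^ Suc n) - (c1 * lam ^ n + c2 * mu ^ n)"
      using rec[of n] Suc by simp
    also have "\<dots> = c1 * lam ^ n * (6 * lam - 1) + c2 * mu ^ n * (6 * mu - 1)"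
      by (simp add: algebra_simps)
    also have "\<dots> = c1 * lam ^ Suc (Suc n) + c2 * mu ^ Suc (Suc n)"
    proof -
      have l: "lam ^ Suc (Suc n) = lam ^ n * (6 * lam - 1)" by (simp only: power_Suc2 mult.assoc lam_sq)
      have m: "mu ^ Suc (Suc n) = mu ^ n * (6 * mu - 1)" by (simp only: power_Suc2 mult.assoc mu_sq)
      show ?thesis unfolding l m by (simp only: mult.assoc)
    qed
    finally show ?case using Suc by simp
  qed
  then show ?thesis unfolding c1_def c2_def by simp
qed

lemma aa_rec: "aa (Suc (Suc n)) = 6 * aa (Suc n) - aa n"
  using aa_Suc[of "Suc n"] bb_Suc[of n] by simp

lemma FF_rec: "FF (Suc (Suc n)) = 10 * aa (Suc n) - 2 * aa n + 6 * FF (Suc n) - FF n"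
  using FF_Suc[of "Suc n"] bb_Suc[of n] GG_Suc[of n] by simp

definition EE :: "nat \<Rightarrow> real" where
  "EE n = FF n - real n * (aa n + aa (Suc n)) / 4"

lemma EE_rec: "EE (Suc (Suc n)) = 6 * EE (Suc n) - EE n"
proof -
  have r1: "aa (Suc (Suc n)) = 6 * aa (Suc n) - aa n" by (rule aa_rec)
  have r2: "aa (Suc (Suc (Suc n))) = 6 * aa (Suc (Suc n)) - aa (Suc n)" by (rule aa_rec)
  show ?thesis unfolding EE_def FF_rec r2 r1 by (simp add: field_simps)
qed

lemma limit_aux:
  fixes A A' e :: "nat \<Rightarrow> real"
  assumes "A \<longlonglongrightarrow> \<alpha>" "A' \<longlonglongrightarrow> \<alpha>" "e \<longlonglongrightarrow> e1" "\<alpha> \<noteq> 0"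
  shows "(\<lambda>n. (1 + lam * A' n / A n) / 4 + e n * (1 / real n) / A n) \<longlonglongrightarrow> (1 + lam) / 4"
proof -
  have "(\<lambda>n. (1 + lam * A' n / A n) / 4 + e n * (1 / real n) / A n) \<longlonglongrightarrow> (1 + lam * \<alpha> / \<alpha>) / 4 + e1 * 0 / \<alpha>"
    by (intro tendsto_intros assms) simp_all
  then show ?thesis using assms(4) by simp
qed

lemma aa_card: "aa n = real (card (W n))"
  by (simp add: aa_def SS_def)

lemma FF_IDF: "1 \<le> n \<Longrightarrow> FF n = real (IDF (pyrene_V n) (pyrene_E n))"
  by (simp add: FF_def SS_def IDF_W)

lemma aa_Phi: "1 \<le> n \<Longrightarrow> aa n = real (Phi (pyrene_V n) (pyrene_E n))"
  by (simp add: aa_card Phi_W)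

lemma W_nonempty: "replicate n (D True True) \<in> W n"
  unfolding W_def valid_def lt_def by auto

lemma aa_pos: "aa n > 0"
proof -
  have "W n \<noteq> {}" using W_nonempty by blast
  then have "card (W n) > 0" using finite_W by (simp add: card_gt_0_iff)
  then show ?thesis unfolding aa_card by simp
qed

lemma aa_1: "aa 1 = 6" using aa_Suc[of 0] aa_0 bb_0 by simp

theorem main_limit:
  "(\<lambda>n. real (IDF (pyrene_V n) (pyrene_E n)) / (real n * real (Phi (pyrene_V n) (pyrene_E n))))
     \<longlonglongrightarrow> 1 + sqrt 2 / 2"
proof -
  define \<alpha> where "\<alpha> = (aa 1 - mu * aa 0) / (lam - mu)"
  define \<beta> where "\<beta> = (lam * aa 0 - aa 1) / (lam - mu)"
  define e1 where "e1 = (EE 1 - mu * EE 0) / (lam - mu)"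
  define e2 where "e2 = (lam * EE 0 - EE 1) / (lam - mu)"
  define \<rho> where "\<rho> = mu / lam"
  have lampow: "lam ^ n \<noteq> 0" for n using lam_pos by simp
  have rho: "norm \<rho> < 1" unfolding \<rho>_def using mu_pos mu_lt_lam lam_pos by simp
  have rhopow: "mu ^ n = lam ^ n * \<rho> ^ n" for n unfolding \<rho>_def using lam_pos by (simp add: power_divide)
  have cfa: "aa n = \<alpha> * lam ^ n + \<beta> * mu ^ n" for n
    unfolding \<alpha>_def \<beta>_def by (rule closed_form) (rule aa_rec)
  have cfe: "EE n = e1 * lam ^ n + e2 * mu ^ n" for n
    unfolding e1_def e2_def by (rule closed_form) (rule EE_rec)
  have alpha_ne: "\<alpha> \<noteq> 0"
  proof -
    have "aa 1 - mu * aa 0 = 6 - mu" using aa_1 aa_0 by simp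
    moreover have "6 - mu > 0" unfolding mu_def using real_sqrt_ge_zero[of 2] by linarith
    moreover have "lam - mu > 0" using mu_lt_lam by simp
    ultimately show ?thesis unfolding \<alpha>_def by simp
  qed
  define A where "A n = aa n / lam ^ n" for n
  define e where "e n = EE n / lam ^ n" for n
  have A_eq: "A n = \<alpha> + \<beta> * \<rho> ^ n" for n
    unfolding A_def cfa rhopow using lampow[of n] by (simp add: field_simps)
  have e_eq: "e n = e1 + e2 * \<rho> ^ n" for n
    unfolding e_def cfe rhopow using lampow[of n] by (simp add: field_simps)
  have rho0: "(\<lambda>n. \<rho> ^ n) \<longlonglongrightarrow> 0" using rho by (rule LIMSEQ_power_zero)
  have A_lim: "A \<longlonglongrightarrow> \<alpha>"
  proof -
    have "(\<lambda>n. \<alpha> + \<beta> * \<rho> ^ n) \<longlonglongrightarrow> \<alpha> + \<beta> * 0" by (intro tendsto_intros rho0)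
    then show ?thesis unfolding A_eq by simp
  qed
  have A'_lim: "(\<lambda>n. A (Suc n)) \<longlonglongrightarrow> \<alpha>" using A_lim by (rule LIMSEQ_Suc)
  have e_lim: "e \<longlonglongrightarrow> e1"
  proof -
    have "(\<lambda>n. e1 + e2 * \<rho> ^ n) \<longlonglongrightarrow> e1 + e2 * 0" by (intro tendsto_intros rho0)
    then show ?thesis unfolding e_eq by simp
  qed
  have L: "(\<lambda>n. (1 + lam * A (Suc n) / A n) / 4 + e n * (1 / real n) / A n) \<longlonglongrightarrow> (1 + lam) / 4"
    by (rule limit_aux[OF A_lim A'_lim e_lim alpha_ne])
  have target: "(1 + lam) / 4 = 1 + sqrt 2 / 2" unfolding lam_def by simp
  have ev: "\<forall>\<^sub>F n in sequentially. (1 + lam * A (Suc n) / A n) / 4 + e n * (1 / real n) / A n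
      = real (IDF (pyrene_V n) (pyrene_E n)) / (real n * real (Phi (pyrene_V n) (pyrene_E n)))"
  proof (rule eventually_sequentiallyI[of 1])
    fix n :: nat assume n: "1 \<le> n"
    have an: "aa n > 0" by (rule aa_pos)
    have nn: "real n > 0" using n by simp
    have lp: "lam ^ n > 0" using lam_pos by simp
    have ff: "FF n = EE n + real n * (aa n + aa (Suc n)) / 4" unfolding EE_def by simp
    have "(1 + lam * A (Suc n) / A n) / 4 + e n * (1 / real n) / A n
        = (1 + aa (Suc n) / aa n) / 4 + EE n / (real n * aa n)"
      unfolding A_def e_def using an nn lp lam_pos by (simp add: field_simps)
    also have "\<dots> = FF n / (real n * aa n)"
      unfolding ff using an nn by (simp add: field_simps)
    also have "\<dots> = real (IDF (pyrene_V n) (pyrene_E n)) / (real n * real (Phi (pyrene_V n) (pyrene_E n)))"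
      using FF_IDF[OF n] aa_Phi[OF n] by simp
    finally show "(1 + lam * A (Suc n) / A n) / 4 + e n * (1 / real n) / A n
      = real (IDF (pyrene_V n) (pyrene_E n)) / (real n * real (Phi (pyrene_V n) (pyrene_E n)))" .
  qed
  show ?thesis using Lim_transform_eventually[OF L ev] target by simp
qed

theorem corollary3p5:
  shows "(\<lambda>n. real (IDF (pyrene_V n) (pyrene_E n)) /
              (real n * real (Phi (pyrene_V n) (pyrene_E n))))
         \<longlonglongrightarrow> 1 + sqrt 2 / 2"
  by (rule main_limit)

end
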